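(* Let $q\ge2$, let $U$ be dual-unitary on $\mathbb{C}^q\otimes\mathbb{C}^q$, and let $\lambda_1,\dots,\lambda_{q^2-1}$ be the nontrivial eigenvalues of $\mathcal{M}_+^U$ (respectively of $\mathcal{M}_-^U$), ordered so that $|\lambda_1|\ge|\lambda_2|\ge\dots\ge|\lambda_{q^2-1}|$. Then $$\sum_{i=1}^{q^2-1}|\lambda_i|^2\le (q^2-1)(1-e_p(U)),\qquad |\lambda_k|\le \sqrt{1-e_p(U)}\,\frac{\sqrt{q^2-1}}{\sqrt k}\quad(1\le k\le q^2-1),$$ in particular $|\lambda_{q^2-1}|\le\sqrt{1-e_p(U)}$ and $|\lambda_1|\le\sqrt{1-e_p(U)}\sqrt{q^2-1}$. Consequently, for $1\le k\le q^2-1$, if $e_p(U)>1-\frac{k}{q^2-1}$ then $|\lambda_j|<1$ for all $j\ge k$; and if $e_p(U)>\frac{q^2-2}{q^2-1}$, then all nontrivial eigenvalues of both $\mathcal{M}_+^{U'}$ and $\mathcal{M}_-^{U'}$ have modulus strictly less than $1$ for every $U'=(u_1\otimes u_2)U(v_1\otimes v_2)$ with $u_1,u_2,v_1,v_2\in U(q)$ (the circuit is mixing whatever the single-site unitaries).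
   Context: Product basis $|i\alpha\rangle$ of $\mathbb{C}^q\otimes\mathbb{C}^q$; realignment $\langle\beta\alpha|X^{R_1}|ji\rangle=\langle i\alpha|X|j\beta\rangle$; $U$ is dual-unitary if $U$ and $U^{R_1}$ are unitary. $S$ is the swap operator. $E(U)=1-q^{-4}\operatorname{tr}[(U^{R_1}U^{R_1\dagger})^2]$, $E(S)=1-1/q^2$, and $e_p(U)=\frac{E(U)+E(US)-E(S)}{E(S)}$. For unitary $U$, $\mathcal{M}_+^U(a)=\frac1q\operatorname{tr}_1[U^\dagger(a\otimes I)U]$ and $\mathcal{M}_-^U(a)=\frac1q\operatorname{tr}_2[U^\dagger(I\otimes a)U]$ on $q\times q$ matrices; each fixes $I$ and preserves the space of traceless matrices, and its nontrivial eigenvalues are the $q^2-1$ eigenvalues (with algebraic multiplicity) of its restriction to traceless matrices. *)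

theory Defs
  imports "Jordan_Normal_Form.Matrix" "Jordan_Normal_Form.Char_Poly"
begin

text \<open>Operators on C^q (x) C^q are complex (q*q) x (q*q) matrices; the product
  basis vector |i alpha> has index i*q + alpha (first factor i, second alpha).\<close>

definition adj :: "complex mat \<Rightarrow> complex mat" where
  "adj A = mat (dim_col A) (dim_row A) (\<lambda>(i,j). cnj (A $$ (j,i)))"

definition unitary_mat :: "nat \<Rightarrow> complex mat \<Rightarrow> bool" where
  "unitary_mat n A \<longleftrightarrow> A \<in> carrier_mat n n \<and> A * adj A = 1\<^sub>m n \<and> adj A * A = 1\<^sub>m n"

text \<open>Realignment: <beta alpha| X^R |j i> = <i alpha| X |j beta>.\<close>
definition realign :: "nat \<Rightarrow> complex mat \<Rightarrow> complex mat" where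
  "realign q X = mat (q*q) (q*q)
     (\<lambda>(r,c). X $$ ((c mod q)*q + r mod q, (c div q)*q + r div q))"

definition dual_unitary :: "nat \<Rightarrow> complex mat \<Rightarrow> bool" where
  "dual_unitary q U \<longleftrightarrow> unitary_mat (q*q) U \<and> unitary_mat (q*q) (realign q U)"

text \<open>Swap operator S |i alpha> = |alpha i>.\<close>
definition swap_op :: "nat \<Rightarrow> complex mat" where
  "swap_op q = mat (q*q) (q*q) (\<lambda>(r,c). if r = (c mod q)*q + c div q then 1 else 0)"

definition tens :: "nat \<Rightarrow> complex mat \<Rightarrow> complex mat \<Rightarrow> complex mat" where
  "tens q A B = mat (q*q) (q*q)
     (\<lambda>(r,c). A $$ (r div q, c div q) * B $$ (r mod q, c mod q))"

definition ptrace1 :: "nat \<Rightarrow> complex mat \<Rightarrow> complex mat" where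
  "ptrace1 q X = mat q q (\<lambda>(a,b). \<Sum>i<q. X $$ (i*q + a, i*q + b))"

definition ptrace2 :: "nat \<Rightarrow> complex mat \<Rightarrow> complex mat" where
  "ptrace2 q X = mat q q (\<lambda>(i,j). \<Sum>a<q. X $$ (i*q + a, j*q + a))"

definition mtrace :: "complex mat \<Rightarrow> complex" where
  "mtrace A = (\<Sum>i<dim_row A. A $$ (i,i))"

text \<open>Entangling power E(U) = 1 - q^{-4} tr[(U^R U^R\<dagger>)^2] (the trace is real).\<close>
definition Ent :: "nat \<Rightarrow> complex mat \<Rightarrow> real" where
  "Ent q U = 1 - Re (mtrace ((realign q U * adj (realign q U)) * (realign q U * adj (realign q U))))
               / (real q ^ 4)"

definition ep :: "nat \<Rightarrow> complex mat \<Rightarrow> real" where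
  "ep q U = (Ent q U + Ent q (U * swap_op q) - Ent q (swap_op q)) / Ent q (swap_op q)"

definition Mplus :: "nat \<Rightarrow> complex mat \<Rightarrow> complex mat \<Rightarrow> complex mat" where
  "Mplus q U a = (1 / of_nat q) \<cdot>\<^sub>m ptrace1 q (adj U * tens q a (1\<^sub>m q) * U)"

definition Mminus :: "nat \<Rightarrow> complex mat \<Rightarrow> complex mat \<Rightarrow> complex mat" where
  "Mminus q U a = (1 / of_nat q) \<cdot>\<^sub>m ptrace2 q (adj U * tens q (1\<^sub>m q) a * U)"

definition unit_mat :: "nat \<Rightarrow> nat \<Rightarrow> nat \<Rightarrow> complex mat" where
  "unit_mat q k l = mat q q (\<lambda>(i,j). if i = k \<and> j = l then 1 else 0)"

text \<open>Matrix of the restriction of a linear map M (on q x q matrices, preserving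
  tracelessness) to the space of traceless q x q matrices, w.r.t. the basis
  b_n (n < q^2-1, (k,l) = (n div q, n mod q) ranging over all pairs except (q-1,q-1)):
  b_n = E_kl for k \<noteq> l and b_n = E_kk - E_{q-1,q-1} for k = l.
  The coordinate of a traceless X along b_n is X_kl.\<close>
definition traceless_basis :: "nat \<Rightarrow> nat \<Rightarrow> complex mat" where
  "traceless_basis q n = (if n div q \<noteq> n mod q then unit_mat q (n div q) (n mod q)
       else unit_mat q (n div q) (n div q) - unit_mat q (q-1) (q-1))"

definition restr_traceless :: "nat \<Rightarrow> (complex mat \<Rightarrow> complex mat) \<Rightarrow> complex mat" where
  "restr_traceless q M = mat (q*q - 1) (q*q - 1)
     (\<lambda>(r,c). M (traceless_basis q c) $$ (r div q, r mod q))"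

definition nontriv_eigs_sorted :: "nat \<Rightarrow> (complex mat \<Rightarrow> complex mat) \<Rightarrow> complex list \<Rightarrow> bool" where
  "nontriv_eigs_sorted q M lams \<longleftrightarrow>
     char_poly (restr_traceless q M) = (\<Prod>a\<leftarrow>lams. [:- a, 1:]) \<and>
     sorted_wrt (\<lambda>x y. cmod x \<ge> cmod y) lams"

end

theory Submission
  imports Defs "Jordan_Normal_Form.Schur_Decomposition"
begin

lemma divmod_simps[simp]:
  fixes q a b :: nat
  assumes "b < q"
  shows "(a*q+b) div q = a" "(a*q+b) mod q = b"
  using assms by auto

lemma sum_split:
  fixes f :: "nat \<Rightarrow> 'a::comm_monoid_add"
  shows "(\<Sum>r<q*q. f r) = (\<Sum>a<q. \<Sum>b<q. f (a*q+b))"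
proof -
  have inj: "inj_on (\<lambda>(a,b). a*q+b) ({..<q} \<times> {..<q})"
    by (auto simp: inj_on_def) (metis divmod_simps)+
  have img: "(\<lambda>(a,b). a*q+b) ` ({..<q} \<times> {..<q}) = {..<q*q}"
  proof
    show "(\<lambda>(a,b). a*q+b) ` ({..<q} \<times> {..<q}) \<subseteq> {..<q*q}"
    proof clarsimp
      fix a b assume "a < q" "b < q"
      then have "a*q+b < a*q+q" by simp
      also have "\<dots> = (a+1)*q" by simp
      also have "\<dots> \<le> q*q" using \<open>a<q\<close> by (intro mult_le_mono1) simp
      finally show "a*q+b < q*q" .
    qed
    show "{..<q*q} \<subseteq> (\<lambda>(a,b). a*q+b) ` ({..<q} \<times> {..<q})"
    proof
      fix r assume r: "r \<in> {..<q*q}"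
      then have q0: "q > 0" by (cases q) auto
      have "r div q < q" using r by (intro less_mult_imp_div_less) simp
      moreover have "r mod q < q" using q0 by simp
      moreover have "r = (r div q)*q + r mod q" by simp
      ultimately show "r \<in> (\<lambda>(a,b). a*q+b) ` ({..<q} \<times> {..<q})"
        by (intro image_eqI[of _ _ "(r div q, r mod q)"]) auto
    qed
  qed
  have "(\<Sum>r<q*q. f r) = (\<Sum>p\<in>{..<q}\<times>{..<q}. f ((\<lambda>(a,b). a*q+b) p))"
    by (subst img[symmetric], subst sum.reindex[OF inj], simp)
  also have "\<dots> = (\<Sum>a<q. \<Sum>b<q. f (a*q+b))"
    by (simp add: sum.cartesian_product split_def)
  finally show ?thesis .
qed

lemma mult_entry:
  assumes "A \<in> carrier_mat n m" "B \<in> carrier_mat m p" "i < n" "j < p"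
  shows "(A*B) $$ (i,j) = (\<Sum>k<m. A$$(i,k) * B$$(k,j))"
  using assms by (auto simp: scalar_prod_def lessThan_atLeast0 intro!: sum.cong)

lemma mult_entry'[simp]:
  assumes "dim_col A = dim_row B" "i < dim_row A" "j < dim_col B"
  shows "(A*B) $$ (i,j) = (\<Sum>k<dim_row B. A$$(i,k) * B$$(k,j))"
  using assms by (auto simp: scalar_prod_def lessThan_atLeast0 intro!: sum.cong)

declare index_mult_mat(1)[simp del]

lemma adj_carrier[simp]: "A \<in> carrier_mat n m \<Longrightarrow> adj A \<in> carrier_mat m n"
  by (auto simp: adj_def)
lemma adj_dims[simp]: "dim_row (adj A) = dim_col A" "dim_col (adj A) = dim_row A"
  by (auto simp: adj_def)
lemma adj_entry[simp]: "i < dim_col A \<Longrightarrow> j < dim_row A \<Longrightarrow> adj A $$ (i,j) = cnj (A $$ (j,i))"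
  by (auto simp: adj_def)

lemma adj_adj[simp]: "adj (adj A) = A"
  by (rule eq_matI) (auto)

lemma adj_mult:
  assumes "A \<in> carrier_mat n m" "B \<in> carrier_mat m p"
  shows "adj (A*B) = adj B * adj A"
  by (rule eq_matI) (use assms in \<open>auto simp: mult.commute\<close>)

lemma adj_one[simp]: "adj (1\<^sub>m n) = 1\<^sub>m n"
  by (rule eq_matI) auto

lemma mtrace_comm:
  assumes "A \<in> carrier_mat n m" "B \<in> carrier_mat m n"
  shows "mtrace (A*B) = mtrace (B*A)"
proof -
  have "mtrace (A*B) = (\<Sum>i<n. \<Sum>k<m. A$$(i,k) * B$$(k,i))"
    using assms by (auto simp: mtrace_def mult_entry intro!: sum.cong)
  also have "\<dots> = (\<Sum>k<m. \<Sum>i<n. B$$(k,i) * A$$(i,k))"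
    by (subst sum.swap) (simp add: mult.commute)
  also have "\<dots> = mtrace (B*A)"
    using assms by (auto simp: mtrace_def mult_entry intro!: sum.cong)
  finally show ?thesis .
qed

definition fro :: "complex mat \<Rightarrow> real" where
  "fro A = (\<Sum>i<dim_row A. \<Sum>j<dim_col A. (cmod (A$$(i,j)))^2)"

lemma fro_trace:
  assumes "A \<in> carrier_mat n m"
  shows "fro A = Re (mtrace (A * adj A))"
proof -
  have "mtrace (A * adj A) = (\<Sum>i<n. \<Sum>k<m. A$$(i,k) * cnj (A$$(i,k)))"
    using assms by (auto simp: mtrace_def mult_entry intro!: sum.cong)
  also have "\<dots> = (\<Sum>i<n. \<Sum>k<m. complex_of_real ((cmod (A$$(i,k)))^2))"
    by (simp add: complex_norm_square[symmetric])
  finally show ?thesis using assms by (simp add: fro_def)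
qed


lemma unitary_right:
  assumes N: "N \<in> carrier_mat n n" and NN: "adj N * N = 1\<^sub>m n"
  shows "N * adj N = 1\<^sub>m n"
  using mat_mult_left_right_inverse[OF adj_carrier[OF N] N NN] .

lemma fro_unitary_conj:
  assumes N: "N \<in> carrier_mat n n" and NN: "adj N * N = 1\<^sub>m n" and A: "A \<in> carrier_mat n n"
  shows "fro (adj N * A * N) = fro A"
proof -
  have N': "adj N \<in> carrier_mat n n" using N by simp
  have A': "adj A \<in> carrier_mat n n" using A by simp
  have NN': "N * adj N = 1\<^sub>m n" using unitary_right[OF N NN] .
  have c1: "adj A * N \<in> carrier_mat n n" using A' N by simp
  have c2: "adj N * (adj A * N) \<in> carrier_mat n n" using N' c1 by simp
  have c3: "A * N \<in> carrier_mat n n" using A N by simp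
  have c4: "adj N * A \<in> carrier_mat n n" using A N' by simp
  have c5: "A * adj A \<in> carrier_mat n n" using A A' by simp
  have "adj (adj N * A * N) = adj N * adj (adj N * A)"
    using c4 N by (rule adj_mult)
  also have "adj (adj N * A) = adj A * N" using N' A adj_mult[OF N' A] by simp
  finally have adjX: "adj (adj N * A * N) = adj N * (adj A * N)" .
  have "(adj N * A * N) * adj (adj N * A * N) = (adj N * (A * N)) * (adj N * (adj A * N))"
    using adjX assoc_mult_mat[OF N' A N] by simp
  also have "\<dots> = adj N * ((A * N) * (adj N * (adj A * N)))"
    using N' c3 c2 by (rule assoc_mult_mat)
  also have "(A * N) * (adj N * (adj A * N)) = A * (N * (adj N * (adj A * N)))"
    using A N c2 by (rule assoc_mult_mat)
  also have "N * (adj N * (adj A * N)) = (N * adj N) * (adj A * N)"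
    by (rule assoc_mult_mat[symmetric, OF N N' c1])
  also have "\<dots> = adj A * N" using NN' left_mult_one_mat[OF c1] by simp
  also have "A * (adj A * N) = A * adj A * N" using assoc_mult_mat[OF A A' N] by simp
  finally have "mtrace ((adj N * A * N) * adj (adj N * A * N)) = mtrace (adj N * ((A * adj A) * N))"
    by simp
  also have "\<dots> = mtrace (((A * adj A) * N) * adj N)"
    using N' mult_carrier_mat[OF c5 N] by (rule mtrace_comm)
  also have "((A * adj A) * N) * adj N = A * adj A"
    using assoc_mult_mat[OF c5 N N'] NN' right_mult_one_mat[OF c5] by simp
  finally show ?thesis
    using fro_trace[of "adj N * A * N" n n] fro_trace[OF A] mult_carrier_mat[OF c4 N] by simp
qed

lemma cscalar_self: "v \<bullet>c v = complex_of_real (\<Sum>k<dim_vec v. (cmod (v$k))^2)"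
  by (simp add: scalar_prod_def lessThan_atLeast0 complex_norm_square[symmetric])

lemma schur_fro:
  fixes A :: "complex mat"
  assumes "A \<in> carrier_mat n n" "char_poly A = (\<Prod>e\<leftarrow>es. [:- e, 1:])"
  shows "(\<Sum>e\<leftarrow>es. (cmod e)^2) \<le> fro A"
  using assms
proof (induct es arbitrary: n A)
  case Nil
  then show ?case by (simp add: fro_def sum_nonneg)
next
  case (Cons e es n A)
  from Cons have A: "A \<in> carrier_mat n n" by auto
  let ?cp = "char_poly A"
  from Cons(3)
  have cp: "?cp = [: -e, 1 :] * (\<Prod>e \<leftarrow> es. [:- e, 1:])" by auto
  have mon: "monic (\<Prod>e\<leftarrow> es. [:- e, 1:])" by (rule monic_prod_list, auto)
  have deg: "degree ?cp = Suc (degree (\<Prod>e\<leftarrow> es. [:- e, 1:]))" unfolding cp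
    by (subst degree_mult_eq, insert mon, auto)
  with degree_monic_char_poly[OF A] have n: "n \<noteq> 0" by auto
  define v where "v = find_eigenvector A e"
  define b where "b = basis_completion v"
  define ws where "ws = gram_schmidt n b"
  have e: "eigenvalue A e" 
    unfolding eigenvalue_root_char_poly[OF A] cp by simp
  from find_eigenvector[OF A e] have ev: "eigenvector A v e" unfolding v_def .
  from this[unfolded eigenvector_def]
  have v[simp]: "v \<in> carrier_vec n" and v0: "v \<noteq> 0\<^sub>v n"
    using A by auto
  have eig: "A *\<^sub>v v = e \<cdot>\<^sub>v v"
    using ev unfolding eigenvector_def by auto
  have dimv: "dim_vec v = n" using carrier_vecD[OF v] .
  interpret cof_vec_space n "TYPE(complex)" .
  from basis_completion[OF v v0, folded b_def]
  have span_b: "span (set b) = carrier_vec n" and dist_b: "distinct b" 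
    and indep: "\<not> lin_dep (set b)" and b: "set b \<subseteq> carrier_vec n" and hdb: "hd b = v" 
    and len_b: "length b = n" by auto
  from hdb len_b n obtain vs where bv: "b = v # vs" by (cases b, auto)
  from gram_schmidt_result[OF b dist_b indep refl, folded ws_def]
  have ws: "set ws \<subseteq> carrier_vec n" "corthogonal ws" "length ws = n" 
    by (auto simp: len_b)
  from gram_schmidt_hd[OF v, of vs, folded bv] have hdws: "hd ws = v" unfolding ws_def .
  have ws0: "ws ! 0 = v" using hdws ws(3) n by (cases ws) auto
  define s where "s = (\<lambda>j. sqrt (\<Sum>k<n. (cmod (ws!j$k))^2))"
  have wsj: "j < n \<Longrightarrow> ws!j \<in> carrier_vec n" for j using ws by auto
  have wsnorm: "ws!j \<bullet>c ws!j = complex_of_real ((s j)^2)" if j: "j < n" for j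
    using cscalar_self[of "ws!j"] wsj[OF j] by (simp add: s_def sum_nonneg)
  have spos: "s j \<noteq> 0" if j: "j < n" for j
  proof
    assume "s j = 0"
    then have "ws!j \<bullet>c ws!j = 0" using wsnorm[OF j] by simp
    then show False using corthogonalD[OF ws(2), of j j] ws(3) j by auto
  qed
  define N where "N = mat n n (\<lambda>(i,j). ws!j $ i / complex_of_real (s j))"
  have N: "N \<in> carrier_mat n n" by (simp add: N_def)
  have NN: "adj N * N = 1\<^sub>m n"
  proof (rule eq_matI)
    fix i j assume i: "i < dim_row (1\<^sub>m n)" and j: "j < dim_col (1\<^sub>m n)"
    then have i: "i < n" and j: "j < n" by auto
    have "(adj N * N) $$ (i,j) = (\<Sum>k<n. cnj (ws!i$k) * ws!j$k) / (complex_of_real (s i) * complex_of_real (s j))"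
      using i j N by (simp add: N_def sum_divide_distrib algebra_simps)
    also have "(\<Sum>k<n. cnj (ws!i$k) * ws!j$k) = ws!j \<bullet>c ws!i"
      using wsj[OF i] wsj[OF j] by (simp add: scalar_prod_def lessThan_atLeast0 mult.commute)
    finally have eq: "(adj N * N) $$ (i,j) = (ws!j \<bullet>c ws!i) / (complex_of_real (s i) * complex_of_real (s j))" .
    show "(adj N * N) $$ (i,j) = 1\<^sub>m n $$ (i,j)"
    proof (cases "i = j")
      case True
      then show ?thesis using eq wsnorm[OF i] spos[OF i] i by (simp add: power2_eq_square)
    next
      case False
      then have "ws!j \<bullet>c ws!i = 0" using corthogonalD[OF ws(2), of j i] ws(3) i j by auto
      then show ?thesis using eq False i j by simp
    qed
  qed (use N in auto)
  define A' where "A' = adj N * A * N"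
  have A'c: "A' \<in> carrier_mat n n" using mult_carrier_mat[OF mult_carrier_mat[OF adj_carrier[OF N] A] N] by (simp add: A'_def)
  have froeq: "fro A' = fro A" unfolding A'_def by (rule fro_unitary_conj[OF N NN A])
  have col0: "A' $$ (i,0) = (if i = 0 then e else 0)" if i: "i < n" for i
  proof -
    have AN0: "(A * N) $$ (k,0) = e * N $$ (k,0)" if k: "k < n" for k
    proof -
      have "(A * N) $$ (k,0) = (\<Sum>l<n. A $$ (k,l) * v $ l) / complex_of_real (s 0)"
        using A N k n ws0 by (simp add: N_def sum_divide_distrib)
      also have "(\<Sum>l<n. A $$ (k,l) * v $ l) = (A *\<^sub>v v) $ k"
        using A k by (auto simp: dimv scalar_prod_def lessThan_atLeast0 intro!: sum.cong)
      also have "\<dots> = e * v $ k" using eig index_smult_vec(1)[of k v e] k unfolding dimv by simp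
      finally show ?thesis using N k n ws0 by (simp add: N_def)
    qed
    have "A' $$ (i,0) = (adj N * (A * N)) $$ (i,0)"
      unfolding A'_def using A N by (simp add: assoc_mult_mat[of _ n n _ n _ n])
    also have "\<dots> = (\<Sum>k<n. adj N $$ (i,k) * (e * N $$ (k,0)))"
      using A N i n AN0 by simp
    also have "\<dots> = e * (adj N * N) $$ (i,0)"
      using A N i n by (simp add: sum_distrib_left algebra_simps)
    also have "\<dots> = (if i = 0 then e else 0)" using NN i n by simp
    finally show ?thesis .
  qed
  obtain m where nm: "n = Suc m" using n by (cases n) auto
  define A3 where "A3 = mat m m (\<lambda>(i,j). A' $$ (i+1, j+1))"
  have A3: "A3 \<in> carrier_mat m m" by (simp add: A3_def)
  define A2 where "A2 = mat 1 m (\<lambda>(i,j). A' $$ (i, j+1))"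
  have A2: "A2 \<in> carrier_mat 1 m" by (simp add: A2_def)
  define A1 where "A1 = mat 1 1 (\<lambda>_. e)"
  have A1: "A1 \<in> carrier_mat 1 1" by (simp add: A1_def)
  have block: "A' = four_block_mat A1 A2 (0\<^sub>m m 1) A3"
  proof (rule eq_matI)
    fix i j assume "i < dim_row (four_block_mat A1 A2 (0\<^sub>m m 1) A3)" "j < dim_col (four_block_mat A1 A2 (0\<^sub>m m 1) A3)"
    then have i: "i < Suc m" and j: "j < Suc m" using A1 A3 by auto
    show "A' $$ (i,j) = four_block_mat A1 A2 (0\<^sub>m m 1) A3 $$ (i,j)"
      using i j col0 nm A1 A2 A3 by (auto simp: A1_def A2_def A3_def four_block_mat_def)
  qed (use A'c nm A1 A3 in auto)
  have sim: "similar_mat A' A"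
    unfolding similar_mat_def similar_mat_wit_def
    by (rule exI[of _ "adj N"], rule exI[of _ N]) (use A'c A N NN unitary_right[OF N NN] in \<open>auto simp: A'_def Let_def\<close>)
  from cp char_poly_similar[OF sim]
  have cp': "char_poly A' = [: -e,1 :] * (\<Prod> e \<leftarrow> es. [:- e, 1:])" by simp
  also have "char_poly A' = char_poly A1 * char_poly A3" 
    unfolding block by (rule char_poly_four_block_zeros_col[OF A1 A2 A3])
  also have "char_poly A1 = [: -e,1 :]"
    by (simp add: A1_def char_poly_defs det_def sign_def)
  finally have cp3: "char_poly A3 = (\<Prod> e \<leftarrow> es. [:- e, 1:])"
    by (metis mult_cancel_left pCons_eq_0_iff zero_neq_one)
  have IH: "(\<Sum>e\<leftarrow>es. (cmod e)^2) \<le> fro A3" by (rule Cons(1)[OF A3 cp3])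
  have "fro A' = (\<Sum>i<Suc m. \<Sum>j<Suc m. (cmod (A'$$(i,j)))^2)"
    using A'c nm by (simp add: fro_def)
  also have "\<dots> = (\<Sum>j<Suc m. (cmod (A'$$(0,j)))^2) + (\<Sum>i<m. \<Sum>j<Suc m. (cmod (A'$$(Suc i,j)))^2)"
    by (rule sum.lessThan_Suc_shift)
  also have "\<dots> = (cmod e)^2 + (\<Sum>j<m. (cmod (A'$$(0,Suc j)))^2)
      + (\<Sum>i<m. (cmod (A'$$(Suc i,0)))^2 + (\<Sum>j<m. (cmod (A'$$(Suc i,Suc j)))^2))"
    using col0 nm by (simp add: sum.lessThan_Suc_shift del: sum.lessThan_Suc)
  also have "\<dots> \<ge> (cmod e)^2 + (\<Sum>i<m. \<Sum>j<m. (cmod (A'$$(Suc i,Suc j)))^2)"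
    by (intro add_mono sum_mono) (auto simp: sum_nonneg)
  moreover have "(\<Sum>i<m. \<Sum>j<m. (cmod (A'$$(Suc i,Suc j)))^2) = fro A3"
    by (simp add: fro_def A3_def)
  ultimately have "(cmod e)^2 + fro A3 \<le> fro A'" by linarith
  then show ?case using IH froeq by simp
qed


definition kmap :: "nat \<Rightarrow> (nat \<Rightarrow> nat \<Rightarrow> nat \<Rightarrow> nat \<Rightarrow> complex) \<Rightarrow> complex mat \<Rightarrow> complex mat" where
  "kmap q K a = mat q q (\<lambda>(x,y). \<Sum>k<q. \<Sum>l<q. a$$(k,l) * K k l x y)"

definition Fmat :: "nat \<Rightarrow> (nat \<Rightarrow> nat \<Rightarrow> nat \<Rightarrow> nat \<Rightarrow> complex) \<Rightarrow> complex mat" where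
  "Fmat q K = mat (q*q) (q*q) (\<lambda>(r,c). K (c div q) (c mod q) (r div q) (r mod q))"

definition dg :: "nat \<Rightarrow> nat \<Rightarrow> complex" where
  "dg q r = (if r div q = r mod q then 1 / of_nat q else 0)"

definition Qm :: "nat \<Rightarrow> complex mat" where
  "Qm q = mat (q*q) (q*q) (\<lambda>(i,r). if i = 0 then dg q r
      else (if r = i-1 then 1 else 0) - (if (i-1) div q = (i-1) mod q then dg q r else 0))"

definition Bc :: "nat \<Rightarrow> nat \<Rightarrow> complex mat" where
  "Bc q c = (if c = 0 then 1\<^sub>m q else traceless_basis q (c-1))"

definition Pm :: "nat \<Rightarrow> complex mat" where
  "Pm q = mat (q*q) (q*q) (\<lambda>(r,c). Bc q c $$ (r div q, r mod q))"

definition trq :: "nat \<Rightarrow> complex mat \<Rightarrow> complex" where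
  "trq q B = (\<Sum>a<q. B$$(a,a))"

lemma lt_qq: "(a::nat) < q \<Longrightarrow> b < q \<Longrightarrow> a*q+b < q*q"
proof -
  assume a: "a < q" and b: "b < q"
  then have "a*q+b < a*q+q" by simp
  also have "\<dots> = (a+1)*q" by simp
  also have "\<dots> \<le> q*q" using a by (intro mult_le_mono1) simp
  finally show ?thesis .
qed

lemma divq_lt: "(r::nat) < q*q \<Longrightarrow> r div q < q"
  by (intro less_mult_imp_div_less) simp

lemma modq_lt: "(r::nat) < q*q \<Longrightarrow> r mod q < q"
  by (cases "q = 0") auto

lemma sum_dg:
  fixes f :: "nat \<Rightarrow> nat \<Rightarrow> complex"
  shows "(\<Sum>r<q*q. dg q r * f (r div q) (r mod q)) = (\<Sum>a<q. f a a) / of_nat q"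
proof -
  have "(\<Sum>r<q*q. dg q r * f (r div q) (r mod q)) = (\<Sum>a<q. \<Sum>b<q. dg q (a*q+b) * f a b)"
    by (subst sum_split) (intro sum.cong refl, simp)
  also have "\<dots> = (\<Sum>a<q. \<Sum>b<q. (if b = a then f a a / of_nat q else 0))"
    by (intro sum.cong refl) (auto simp: dg_def)
  also have "\<dots> = (\<Sum>a<q. f a a / of_nat q)" by simp
  finally show ?thesis by (simp add: sum_divide_distrib)
qed

lemma Qapp:
  assumes i: "i < q*q"
  shows "(\<Sum>r<q*q. Qm q $$ (i,r) * B $$ (r div q, r mod q)) =
    (if i = 0 then trq q B / of_nat q else B $$ ((i-1) div q, (i-1) mod q)
       - (if (i-1) div q = (i-1) mod q then trq q B / of_nat q else 0))"
proof (cases "i = 0")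
  case True
  then show ?thesis using i sum_dg[of q "\<lambda>a b. B$$(a,b)"]
    by (simp add: Qm_def trq_def)
next
  case False
  have "(\<Sum>r<q*q. Qm q $$ (i,r) * B $$ (r div q, r mod q)) =
     (\<Sum>r<q*q. (if r = i-1 then B $$ (r div q, r mod q) else 0))
     - (if (i-1) div q = (i-1) mod q then (\<Sum>r<q*q. dg q r * B $$ (r div q, r mod q)) else 0)"
    using i False by (simp add: Qm_def sum_subtractf algebra_simps if_distrib[of "\<lambda>x. x * _"] cong: if_cong)
  also have "(\<Sum>r<q*q. (if r = i-1 then B $$ (r div q, r mod q) else 0)) = B $$ ((i-1) div q, (i-1) mod q)"
    using i False by (simp add: sum.delta)
  finally show ?thesis using False sum_dg[of q "\<lambda>a b. B$$(a,b)"] by (simp add: trq_def)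
qed

lemma qq_decomp: "(r::nat) = (r div q) * q + r mod q" by simp

lemma last_idx: "0 < q \<Longrightarrow> (q-1)*q + (q-1) = q*q - (1::nat)"
  by (cases q) (auto simp: algebra_simps)

lemma tb_carrier[simp]: "traceless_basis q c \<in> carrier_mat q q"
  by (auto simp: traceless_basis_def unit_mat_def intro!: minus_carrier_mat)

lemma tb_entry:
  assumes c: "c < q*q - 1" and x: "x < q" and y: "y < q"
  shows "traceless_basis q c $$ (x,y) =
     (if c div q \<noteq> c mod q then (if x = c div q \<and> y = c mod q then 1 else 0)
      else (if x = c div q \<and> y = c div q then 1 else 0) - (if x = q-1 \<and> y = q-1 then 1 else 0))"
  using x y by (simp add: traceless_basis_def unit_mat_def)

lemma tb_diag_ne:
  fixes q c :: nat
  assumes c: "c < q*q - 1" and d: "c div q = c mod q"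
  shows "c div q \<noteq> q - 1"
proof
  assume h: "c div q = q - 1"
  have q0: "0 < q" using c by (cases q) auto
  have "c = (c div q)*q + c mod q" by simp
  also have "\<dots> = (q-1)*q + (q-1)" using h d by simp
  also have "\<dots> = q*q-1" using last_idx[OF q0] .
  finally show False using c by simp
qed

lemma tb_coord:
  assumes c: "c < q*q - 1" and i: "i < q*q - 1"
  shows "traceless_basis q c $$ (i div q, i mod q) = (if i = c then 1 else 0)"
proof -
  have q0: "0 < q" using c by (cases q) auto
  have iq: "i div q < q" "i mod q < q" using i divq_lt[of i q] modq_lt[of i q] by auto
  have ne: "\<not> (i div q = q-1 \<and> i mod q = q-1)"
  proof
    assume "i div q = q-1 \<and> i mod q = q-1"
    then have "i = (q-1)*q + (q-1)" using qq_decomp[of i q] by simp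
    then show False using last_idx[OF q0] i by simp
  qed
  have eqiff: "(i div q = c div q \<and> i mod q = c mod q) \<longleftrightarrow> i = c"
    by (metis qq_decomp)
  show ?thesis
    using tb_entry[OF c iq] ne eqiff tb_diag_ne[OF c] by auto
qed

lemma tb_trace:
  assumes c: "c < q*q - 1"
  shows "trq q (traceless_basis q c) = 0"
proof -
  have cq: "c div q < q" "c mod q < q" using c divq_lt[of c q] modq_lt[of c q] by auto
  show ?thesis
  proof (cases "c div q = c mod q")
    case True
    have ne: "c div q \<noteq> q - 1" using tb_diag_ne[OF c True] .
    have q0: "0 < q" using c by (cases q) auto
    have "trq q (traceless_basis q c) = (\<Sum>a<q. (if a = c div q then 1 else 0) - (if a = q-1 then 1 else 0))"
      unfolding trq_def by (intro sum.cong refl) (use c True in \<open>auto simp: tb_entry\<close>)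
    also have "\<dots> = 0" using cq q0 by (simp add: sum_subtractf)
    finally show ?thesis .
  next
    case False
    have "trq q (traceless_basis q c) = (\<Sum>a<q. 0)"
      unfolding trq_def by (intro sum.cong refl) (use c False in \<open>auto simp: tb_entry\<close>)
    then show ?thesis by simp
  qed
qed

lemma trq_one[simp]: "trq q (1\<^sub>m q) = of_nat q"
  by (simp add: trq_def)

lemma Qm_carrier[simp]: "Qm q \<in> carrier_mat (q*q) (q*q)" by (simp add: Qm_def)
lemma Pm_carrier[simp]: "Pm q \<in> carrier_mat (q*q) (q*q)" by (simp add: Pm_def)
lemma Fmat_carrier[simp]: "Fmat q K \<in> carrier_mat (q*q) (q*q)" by (simp add: Fmat_def)
lemma kmap_carrier[simp]: "kmap q K a \<in> carrier_mat q q" by (simp add: kmap_def)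

lemma Qapp_col:
  assumes i: "i < q*q" and c: "c < q*q" and Y: "Y \<in> carrier_mat (q*q) (q*q)"
    and Yc: "\<And>r. r < q*q \<Longrightarrow> Y $$ (r,c) = B $$ (r div q, r mod q)"
  shows "(Qm q * Y) $$ (i,c) = (if i = 0 then trq q B / of_nat q else B $$ ((i-1) div q, (i-1) mod q)
       - (if (i-1) div q = (i-1) mod q then trq q B / of_nat q else 0))"
proof -
  have "(Qm q * Y) $$ (i,c) = (\<Sum>r<q*q. Qm q $$ (i,r) * Y $$ (r,c))"
    using i c Y by (simp add: Qm_def)
  also have "\<dots> = (\<Sum>r<q*q. Qm q $$ (i,r) * B $$ (r div q, r mod q))"
    using Yc by (intro sum.cong) auto
  finally have "(Qm q * Y) $$ (i,c) = (\<Sum>r<q*q. Qm q $$ (i,r) * B $$ (r div q, r mod q))" .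
  then show ?thesis using Qapp[OF i] by simp
qed

lemma QP:
  assumes q0: "0 < q"
  shows "Qm q * Pm q = 1\<^sub>m (q*q)"
proof (rule eq_matI)
  fix i c assume "i < dim_row (1\<^sub>m (q*q))" "c < dim_col (1\<^sub>m (q*q))"
  then have i: "i < q*q" and c: "c < q*q" by auto
  have e: "(Qm q * Pm q) $$ (i,c) = (if i = 0 then trq q (Bc q c) / of_nat q else Bc q c $$ ((i-1) div q, (i-1) mod q)
       - (if (i-1) div q = (i-1) mod q then trq q (Bc q c) / of_nat q else 0))"
    by (rule Qapp_col[OF i c Pm_carrier]) (simp add: Pm_def c)
  show "(Qm q * Pm q) $$ (i,c) = 1\<^sub>m (q*q) $$ (i,c)"
  proof (cases "c = 0")
    case True
    have "(i-1) div q < q" "(i-1) mod q < q" using i divq_lt[of "i-1" q] modq_lt[of "i-1" q] by auto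
    then show ?thesis using e True i q0 by (simp add: Bc_def)
  next
    case False
    have c1: "c - 1 < q*q - 1" using c False by simp
    have tr: "trq q (Bc q c) = 0" using tb_trace[OF c1] False by (simp add: Bc_def)
    show ?thesis
    proof (cases "i = 0")
      case True then show ?thesis using e tr False i c by simp
    next
      case i0: False
      have i1: "i - 1 < q*q - 1" using i i0 by simp
      have "(i - 1 = c - 1) = (i = c)" using i0 False by auto
      then show ?thesis using e tr False i0 i c tb_coord[OF c1 i1] by (simp add: Bc_def)
    qed
  qed
qed (auto simp: Qm_def Pm_def)

lemma FP_entry:
  assumes s: "s < q*q" and c: "c < q*q"
  shows "(Fmat q K * Pm q) $$ (s,c) = kmap q K (Bc q c) $$ (s div q, s mod q)"
proof -
  have "(Fmat q K * Pm q) $$ (s,c) = (\<Sum>r<q*q. K (r div q) (r mod q) (s div q) (s mod q) * Bc q c $$ (r div q, r mod q))"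
    using s c by (simp add: Fmat_def Pm_def)
  also have "\<dots> = (\<Sum>a<q. \<Sum>b<q. K a b (s div q) (s mod q) * Bc q c $$ (a, b))"
    by (subst sum_split) (intro sum.cong refl, simp)
  also have "\<dots> = kmap q K (Bc q c) $$ (s div q, s mod q)"
    using divq_lt[OF s] modq_lt[OF s] by (simp add: kmap_def mult.commute)
  finally show ?thesis .
qed

lemma kmap_one:
  assumes H1: "\<And>x y. x < q \<Longrightarrow> y < q \<Longrightarrow> (\<Sum>k<q. K k k x y) = (if x = y then 1 else 0)"
  shows "kmap q K (1\<^sub>m q) = 1\<^sub>m q"
proof (rule eq_matI)
  fix x y assume "x < dim_row (1\<^sub>m q)" "y < dim_col (1\<^sub>m q)"
  then have x: "x < q" and y: "y < q" by auto
  have "kmap q K (1\<^sub>m q) $$ (x,y) = (\<Sum>k<q. \<Sum>l<q. (if l = k then K k k x y else 0))"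
    using x y by (simp add: kmap_def if_distrib[of "\<lambda>t. t * _"] cong: if_cong)
  also have "\<dots> = (\<Sum>k<q. K k k x y)" by simp
  finally show "kmap q K (1\<^sub>m q) $$ (x,y) = 1\<^sub>m q $$ (x,y)" using H1[OF x y] x y by simp
qed (auto simp: kmap_def)

lemma kmap_trace:
  assumes H2: "\<And>k l. k < q \<Longrightarrow> l < q \<Longrightarrow> (\<Sum>x<q. K k l x x) = (if k = l then 1 else 0)"
  shows "trq q (kmap q K B) = trq q B"
proof -
  have "trq q (kmap q K B) = (\<Sum>x<q. \<Sum>k<q. \<Sum>l<q. B$$(k,l) * K k l x x)"
    by (simp add: trq_def kmap_def)
  also have "\<dots> = (\<Sum>k<q. \<Sum>l<q. B$$(k,l) * (\<Sum>x<q. K k l x x))"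
  proof -
    have "(\<Sum>x<q. \<Sum>k<q. \<Sum>l<q. B$$(k,l) * K k l x x) = (\<Sum>k<q. \<Sum>x<q. \<Sum>l<q. B$$(k,l) * K k l x x)"
      by (rule sum.swap)
    also have "\<dots> = (\<Sum>k<q. \<Sum>l<q. \<Sum>x<q. B$$(k,l) * K k l x x)"
      by (rule sum.cong[OF refl], rule sum.swap)
    finally show ?thesis by (simp add: sum_distrib_left)
  qed
  also have "\<dots> = (\<Sum>k<q. \<Sum>l<q. (if l = k then B$$(k,k) else 0))"
    by (intro sum.cong refl) (auto simp: H2)
  also have "\<dots> = trq q B" by (simp add: trq_def)
  finally show ?thesis .
qed

lemma restr_carrier[simp]: "restr_traceless q M \<in> carrier_mat (q*q-1) (q*q-1)"
  by (simp add: restr_traceless_def)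
lemma restr_dims[simp]: "dim_row (restr_traceless q M) = q*q-1" "dim_col (restr_traceless q M) = q*q-1"
  by (simp_all add: restr_traceless_def)

lemma QFP:
  assumes q0: "0 < q"
    and H1: "\<And>x y. x < q \<Longrightarrow> y < q \<Longrightarrow> (\<Sum>k<q. K k k x y) = (if x = y then 1 else 0)"
    and H2: "\<And>k l. k < q \<Longrightarrow> l < q \<Longrightarrow> (\<Sum>x<q. K k l x x) = (if k = l then 1 else 0)"
  shows "Qm q * (Fmat q K * Pm q) = four_block_mat (1\<^sub>m 1) (0\<^sub>m 1 (q*q-1)) (0\<^sub>m (q*q-1) 1) (restr_traceless q (kmap q K))"
    (is "_ = ?B")
proof -
  have qq: "1 + (q*q-1) = q*q" using q0 by simp
  have FPc: "Fmat q K * Pm q \<in> carrier_mat (q*q) (q*q)" by (rule mult_carrier_mat[OF Fmat_carrier Pm_carrier])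
  show ?thesis
  proof (rule eq_matI)
    fix i c assume "i < dim_row ?B" "c < dim_col ?B"
    then have i: "i < q*q" and c: "c < q*q" using qq by auto
    have e: "(Qm q * (Fmat q K * Pm q)) $$ (i,c) = (if i = 0 then trq q (kmap q K (Bc q c)) / of_nat q
        else kmap q K (Bc q c) $$ ((i-1) div q, (i-1) mod q)
       - (if (i-1) div q = (i-1) mod q then trq q (kmap q K (Bc q c)) / of_nat q else 0))"
      by (rule Qapp_col[OF i c FPc]) (rule FP_entry[OF _ c])
    show "(Qm q * (Fmat q K * Pm q)) $$ (i,c) = ?B $$ (i,c)"
    proof (cases "c = 0")
      case True
      have "(i-1) div q < q" "(i-1) mod q < q" using i divq_lt[of "i-1" q] modq_lt[of "i-1" q] by auto
      then show ?thesis using e True i q0 qq by (simp add: Bc_def kmap_one[of q K, OF H1] four_block_mat_def)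
    next
      case False
      have c1: "c - 1 < q*q - 1" using c False by simp
      have tr: "trq q (kmap q K (Bc q c)) = 0" using tb_trace[OF c1] False kmap_trace[of q K, OF H2] by (simp add: Bc_def)
      show ?thesis
      proof (cases "i = 0")
        case True then show ?thesis using e tr False i c qq by (simp add: four_block_mat_def)
      next
        case i0: False
        have i1: "i - 1 < q*q - 1" using i i0 by simp
        show ?thesis using e tr False i0 i c qq i1 c1 by (simp add: Bc_def four_block_mat_def restr_traceless_def)
      qed
    qed
  qed (use qq in \<open>auto simp: Qm_def Pm_def\<close>)
qed

lemma block_charpoly:
  assumes q0: "0 < q"
    and H1: "\<And>x y. x < q \<Longrightarrow> y < q \<Longrightarrow> (\<Sum>k<q. K k k x y) = (if x = y then 1 else 0)"
    and H2: "\<And>k l. k < q \<Longrightarrow> l < q \<Longrightarrow> (\<Sum>x<q. K k l x x) = (if k = l then 1 else 0)"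
  shows "char_poly (Fmat q K) = [:-1, 1:] * char_poly (restr_traceless q (kmap q K))"
proof -
  let ?N = "q*q"
  let ?R = "restr_traceless q (kmap q K)"
  let ?B = "four_block_mat (1\<^sub>m 1) (0\<^sub>m 1 (q*q-1)) (0\<^sub>m (q*q-1) 1) ?R"
  have qq: "1 + (q*q-1) = q*q" using q0 by simp
  have QP': "Qm q * Pm q = 1\<^sub>m ?N" by (rule QP[OF q0])
  have PQ: "Pm q * Qm q = 1\<^sub>m ?N" by (rule mat_mult_left_right_inverse[OF Qm_carrier Pm_carrier QP'])
  have "?B \<in> carrier_mat (1 + (q*q-1)) (1 + (q*q-1))"
    by (rule four_block_carrier_mat[OF one_carrier_mat restr_carrier])
  then have Bc: "?B \<in> carrier_mat ?N ?N" unfolding qq .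
  have QFPeq: "Qm q * (Fmat q K * Pm q) = ?B" by (rule QFP[OF q0 H1 H2])
  have FPc: "Fmat q K * Pm q \<in> carrier_mat ?N ?N" by (rule mult_carrier_mat[OF Fmat_carrier Pm_carrier])
  have "Pm q * ?B * Qm q = Pm q * (Qm q * (Fmat q K * Pm q)) * Qm q" using QFPeq by simp
  also have "Pm q * (Qm q * (Fmat q K * Pm q)) = (Pm q * Qm q) * (Fmat q K * Pm q)"
    by (rule assoc_mult_mat[symmetric, OF Pm_carrier Qm_carrier FPc])
  also have "\<dots> = Fmat q K * Pm q" using PQ left_mult_one_mat[OF FPc] by simp
  also have "Fmat q K * Pm q * Qm q = Fmat q K * (Pm q * Qm q)"
    by (rule assoc_mult_mat[OF Fmat_carrier Pm_carrier Qm_carrier])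
  also have "\<dots> = Fmat q K" using PQ right_mult_one_mat[OF Fmat_carrier] by simp
  finally have Feq: "Fmat q K = Pm q * ?B * Qm q" by simp
  have "similar_mat (Fmat q K) ?B"
    unfolding similar_mat_def similar_mat_wit_def
    by (rule exI[of _ "Pm q"], rule exI[of _ "Qm q"]) (use Bc PQ QP' Feq[symmetric] Fmat_carrier[of q K] in \<open>auto simp: Let_def Fmat_def\<close>)
  then have "char_poly (Fmat q K) = char_poly ?B" by (rule char_poly_similar)
  also have "\<dots> = char_poly (1\<^sub>m 1 :: complex mat) * char_poly ?R"
    by (rule char_poly_four_block_zeros_col) auto
  also have "char_poly (1\<^sub>m 1 :: complex mat) = [:-1, 1:]"
    by (simp add: char_poly_defs det_def sign_def)
  finally show ?thesis .
qed


definition Kp :: "nat \<Rightarrow> complex mat \<Rightarrow> nat \<Rightarrow> nat \<Rightarrow> nat \<Rightarrow> nat \<Rightarrow> complex" where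
  "Kp q U k l x y = (1 / of_nat q) * (\<Sum>i<q. \<Sum>g<q. cnj (U$$(k*q+g, i*q+x)) * U$$(l*q+g, i*q+y))"

definition Km :: "nat \<Rightarrow> complex mat \<Rightarrow> nat \<Rightarrow> nat \<Rightarrow> nat \<Rightarrow> nat \<Rightarrow> complex" where
  "Km q U k l x y = (1 / of_nat q) * (\<Sum>i<q. \<Sum>g<q. cnj (U$$(g*q+k, x*q+i)) * U$$(g*q+l, y*q+i))"

lemma sandwich_entry:
  assumes U: "U \<in> carrier_mat (q*q) (q*q)" and T: "T \<in> carrier_mat (q*q) (q*q)"
    and r: "r < q*q" and s: "s < q*q"
  shows "(adj U * T * U) $$ (r,s) = (\<Sum>w<q*q. (\<Sum>u<q*q. cnj (U$$(u,r)) * T$$(u,w)) * U$$(w,s))"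
  using U T r s by simp

lemma tens_entry:
  assumes "a < q" "b < q" "c < q" "d < q"
  shows "tens q A B $$ (a*q+b, c*q+d) = A$$(a,c) * B$$(b,d)"
  using assms lt_qq[of a q b] lt_qq[of c q d] by (simp add: tens_def)

lemma tens_carrier[simp]: "tens q A B \<in> carrier_mat (q*q) (q*q)"
  by (simp add: tens_def)

lemma Mplus_entry:
  assumes U: "U \<in> carrier_mat (q*q) (q*q)" and a: "a \<in> carrier_mat q q" and x: "x < q" and y: "y < q"
  shows "Mplus q U a $$ (x,y) = kmap q (Kp q U) a $$ (x,y)"
proof -
  let ?T = "tens q a (1\<^sub>m q)"
  have e1: "(adj U * ?T * U) $$ (i*q+x, i*q+y) =
     (\<Sum>k<q. \<Sum>l<q. \<Sum>g<q. cnj (U$$(k*q+g, i*q+x)) * a$$(k,l) * U$$(l*q+g, i*q+y))" if i: "i < q" for i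
  proof -
    have r: "i*q+x < q*q" "i*q+y < q*q" using lt_qq i x y by auto
    have "(adj U * ?T * U) $$ (i*q+x, i*q+y) = (\<Sum>w<q*q. (\<Sum>u<q*q. cnj (U$$(u,i*q+x)) * ?T$$(u,w)) * U$$(w,i*q+y))"
      by (rule sandwich_entry[OF U tens_carrier r])
    also have "\<dots> = (\<Sum>l<q. \<Sum>g'<q. (\<Sum>k<q. \<Sum>g<q. cnj (U$$(k*q+g,i*q+x)) * (a$$(k,l) * (if g = g' then 1 else 0))) * U$$(l*q+g',i*q+y))"
      by (simp add: sum_split tens_entry)
    also have "\<dots> = (\<Sum>l<q. \<Sum>g'<q. \<Sum>k<q. cnj (U$$(k*q+g',i*q+x)) * a$$(k,l) * U$$(l*q+g',i*q+y))"
      by (simp add: sum_distrib_right if_distrib[of "\<lambda>t. _ * t"] cong: if_cong)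
    also have "\<dots> = (\<Sum>l<q. \<Sum>k<q. \<Sum>g'<q. cnj (U$$(k*q+g',i*q+x)) * a$$(k,l) * U$$(l*q+g',i*q+y))"
      by (rule sum.cong[OF refl], rule sum.swap)
    also have "\<dots> = (\<Sum>k<q. \<Sum>l<q. \<Sum>g'<q. cnj (U$$(k*q+g',i*q+x)) * a$$(k,l) * U$$(l*q+g',i*q+y))"
      by (rule sum.swap)
    finally show ?thesis .
  qed
  have "Mplus q U a $$ (x,y) = (1 / of_nat q) * (\<Sum>i<q. \<Sum>k<q. \<Sum>l<q. \<Sum>g<q. cnj (U$$(k*q+g, i*q+x)) * a$$(k,l) * U$$(l*q+g, i*q+y))"
    using x y e1 by (simp add: Mplus_def ptrace1_def)
  also have "(\<Sum>i<q. \<Sum>k<q. \<Sum>l<q. \<Sum>g<q. cnj (U$$(k*q+g, i*q+x)) * a$$(k,l) * U$$(l*q+g, i*q+y))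
    = (\<Sum>k<q. \<Sum>i<q. \<Sum>l<q. \<Sum>g<q. cnj (U$$(k*q+g, i*q+x)) * a$$(k,l) * U$$(l*q+g, i*q+y))"
    by (rule sum.swap)
  also have "\<dots> = (\<Sum>k<q. \<Sum>l<q. \<Sum>i<q. \<Sum>g<q. cnj (U$$(k*q+g, i*q+x)) * a$$(k,l) * U$$(l*q+g, i*q+y))"
    by (rule sum.cong[OF refl], rule sum.swap)
  finally show ?thesis using x y by (simp add: kmap_def Kp_def sum_distrib_left mult_ac)
qed

lemma Mminus_entry:
  assumes U: "U \<in> carrier_mat (q*q) (q*q)" and a: "a \<in> carrier_mat q q" and x: "x < q" and y: "y < q"
  shows "Mminus q U a $$ (x,y) = kmap q (Km q U) a $$ (x,y)"
proof -
  let ?T = "tens q (1\<^sub>m q) a"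
  have e1: "(adj U * ?T * U) $$ (x*q+i, y*q+i) =
     (\<Sum>k<q. \<Sum>l<q. \<Sum>g<q. cnj (U$$(g*q+k, x*q+i)) * a$$(k,l) * U$$(g*q+l, y*q+i))" if i: "i < q" for i
  proof -
    have r: "x*q+i < q*q" "y*q+i < q*q" using lt_qq i x y by auto
    have "(adj U * ?T * U) $$ (x*q+i, y*q+i) = (\<Sum>w<q*q. (\<Sum>u<q*q. cnj (U$$(u,x*q+i)) * ?T$$(u,w)) * U$$(w,y*q+i))"
      by (rule sandwich_entry[OF U tens_carrier r])
    also have "\<dots> = (\<Sum>g'<q. \<Sum>l<q. (\<Sum>g<q. \<Sum>k<q. cnj (U$$(g*q+k,x*q+i)) * ((if g = g' then 1 else 0) * a$$(k,l))) * U$$(g'*q+l,y*q+i))"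
      by (simp add: sum_split tens_entry)
    also have "\<dots> = (\<Sum>g'<q. \<Sum>l<q. \<Sum>k<q. cnj (U$$(g'*q+k,x*q+i)) * a$$(k,l) * U$$(g'*q+l,y*q+i))"
    proof (rule sum.cong[OF refl], rule sum.cong[OF refl])
      fix g' l assume g': "g' \<in> {..<q}" and l: "l \<in> {..<q}"
      have "(\<Sum>g<q. \<Sum>k<q. cnj (U$$(g*q+k,x*q+i)) * ((if g = g' then 1 else 0) * a$$(k,l)))
        = (\<Sum>k<q. \<Sum>g<q. cnj (U$$(g*q+k,x*q+i)) * ((if g = g' then 1 else 0) * a$$(k,l)))"
        by (rule sum.swap)
      also have "\<dots> = (\<Sum>k<q. cnj (U$$(g'*q+k,x*q+i)) * a$$(k,l))"
        using g' by (simp add: if_distrib[of "\<lambda>t. _ * t"] if_distrib[of "\<lambda>t. t * _"] sum.delta' cong: if_cong)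
      finally show "(\<Sum>g<q. \<Sum>k<q. cnj (U$$(g*q+k,x*q+i)) * ((if g = g' then 1 else 0) * a$$(k,l))) * U$$(g'*q+l,y*q+i)
        = (\<Sum>k<q. cnj (U$$(g'*q+k,x*q+i)) * a$$(k,l) * U$$(g'*q+l,y*q+i))"
        by (simp add: sum_distrib_right)
    qed
    also have "\<dots> = (\<Sum>g'<q. \<Sum>k<q. \<Sum>l<q. cnj (U$$(g'*q+k,x*q+i)) * a$$(k,l) * U$$(g'*q+l,y*q+i))"
      by (rule sum.cong[OF refl], rule sum.swap)
    also have "\<dots> = (\<Sum>k<q. \<Sum>g'<q. \<Sum>l<q. cnj (U$$(g'*q+k,x*q+i)) * a$$(k,l) * U$$(g'*q+l,y*q+i))"
      by (rule sum.swap)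
    also have "\<dots> = (\<Sum>k<q. \<Sum>l<q. \<Sum>g'<q. cnj (U$$(g'*q+k,x*q+i)) * a$$(k,l) * U$$(g'*q+l,y*q+i))"
      by (rule sum.cong[OF refl], rule sum.swap)
    finally show ?thesis .
  qed
  have "Mminus q U a $$ (x,y) = (1 / of_nat q) * (\<Sum>i<q. \<Sum>k<q. \<Sum>l<q. \<Sum>g<q. cnj (U$$(g*q+k, x*q+i)) * a$$(k,l) * U$$(g*q+l, y*q+i))"
    using x y e1 by (simp add: Mminus_def ptrace2_def)
  also have "(\<Sum>i<q. \<Sum>k<q. \<Sum>l<q. \<Sum>g<q. cnj (U$$(g*q+k, x*q+i)) * a$$(k,l) * U$$(g*q+l, y*q+i))
    = (\<Sum>k<q. \<Sum>i<q. \<Sum>l<q. \<Sum>g<q. cnj (U$$(g*q+k, x*q+i)) * a$$(k,l) * U$$(g*q+l, y*q+i))"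
    by (rule sum.swap)
  also have "\<dots> = (\<Sum>k<q. \<Sum>l<q. \<Sum>i<q. \<Sum>g<q. cnj (U$$(g*q+k, x*q+i)) * a$$(k,l) * U$$(g*q+l, y*q+i))"
    by (rule sum.cong[OF refl], rule sum.swap)
  finally show ?thesis using x y by (simp add: kmap_def Km_def sum_distrib_left mult_ac)
qed

lemma Mplus_kmap:
  assumes U: "U \<in> carrier_mat (q*q) (q*q)" and a: "a \<in> carrier_mat q q"
  shows "Mplus q U a = kmap q (Kp q U) a"
  by (rule eq_matI) (use Mplus_entry[OF U a] in \<open>auto simp: Mplus_def ptrace1_def kmap_def\<close>)

lemma Mminus_kmap:
  assumes U: "U \<in> carrier_mat (q*q) (q*q)" and a: "a \<in> carrier_mat q q"
  shows "Mminus q U a = kmap q (Km q U) a"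
  by (rule eq_matI) (use Mminus_entry[OF U a] in \<open>auto simp: Mminus_def ptrace2_def kmap_def\<close>)

lemma restr_cong:
  assumes "\<And>c. c < q*q-1 \<Longrightarrow> M (traceless_basis q c) = M' (traceless_basis q c)"
  shows "restr_traceless q M = restr_traceless q M'"
  using assms by (auto simp: restr_traceless_def intro!: cong_mat)

lemma unit_col:
  assumes U: "unitary_mat N U" and r: "r < N" and s: "s < N"
  shows "(\<Sum>u<N. cnj (U$$(u,r)) * U$$(u,s)) = (if r = s then 1 else 0)"
proof -
  have c: "U \<in> carrier_mat N N" and e: "adj U * U = 1\<^sub>m N" using U by (auto simp: unitary_mat_def)
  have "(adj U * U) $$ (r,s) = (\<Sum>u<N. cnj (U$$(u,r)) * U$$(u,s))" using c r s by simp
  then show ?thesis using e r s by simp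
qed

lemma unit_row:
  assumes U: "unitary_mat N U" and r: "r < N" and s: "s < N"
  shows "(\<Sum>u<N. U$$(r,u) * cnj (U$$(s,u))) = (if r = s then 1 else 0)"
proof -
  have c: "U \<in> carrier_mat N N" and e: "U * adj U = 1\<^sub>m N" using U by (auto simp: unitary_mat_def)
  have "(U * adj U) $$ (r,s) = (\<Sum>u<N. U$$(r,u) * cnj (U$$(s,u)))" using c r s by simp
  then show ?thesis using e r s by simp
qed

lemma of_nat_q_div: "0 < q \<Longrightarrow> 1 / of_nat q * (of_nat q :: complex) = 1" by simp

lemma Kp_H1:
  assumes U: "unitary_mat (q*q) U" and q0: "0 < q" and x: "x < q" and y: "y < q"
  shows "(\<Sum>k<q. Kp q U k k x y) = (if x = y then 1 else 0)"
proof -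
  have "(\<Sum>k<q. Kp q U k k x y) = 1 / of_nat q * (\<Sum>k<q. \<Sum>i<q. \<Sum>g<q. cnj (U$$(k*q+g, i*q+x)) * U$$(k*q+g, i*q+y))"
    by (simp add: Kp_def sum_distrib_left)
  also have "(\<Sum>k<q. \<Sum>i<q. \<Sum>g<q. cnj (U$$(k*q+g, i*q+x)) * U$$(k*q+g, i*q+y))
     = (\<Sum>i<q. \<Sum>k<q. \<Sum>g<q. cnj (U$$(k*q+g, i*q+x)) * U$$(k*q+g, i*q+y))" by (rule sum.swap)
  also have "\<dots> = (\<Sum>i<q. (if x = y then 1 else 0))"
  proof (rule sum.cong[OF refl])
    fix i assume i: "i \<in> {..<q}"
    have r: "i*q+x < q*q" "i*q+y < q*q" using lt_qq i x y by auto
    show "(\<Sum>k<q. \<Sum>g<q. cnj (U$$(k*q+g, i*q+x)) * U$$(k*q+g, i*q+y)) = (if x = y then 1 else 0)"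
      using unit_col[OF U r] by (simp add: sum_split)
  qed
  finally show ?thesis using q0 by simp
qed

lemma Kp_H2:
  assumes U: "unitary_mat (q*q) U" and q0: "0 < q" and k: "k < q" and l: "l < q"
  shows "(\<Sum>x<q. Kp q U k l x x) = (if k = l then 1 else 0)"
proof -
  have "(\<Sum>x<q. Kp q U k l x x) = 1 / of_nat q * (\<Sum>x<q. \<Sum>i<q. \<Sum>g<q. cnj (U$$(k*q+g, i*q+x)) * U$$(l*q+g, i*q+x))"
    by (simp add: Kp_def sum_distrib_left)
  also have "(\<Sum>x<q. \<Sum>i<q. \<Sum>g<q. cnj (U$$(k*q+g, i*q+x)) * U$$(l*q+g, i*q+x))
     = (\<Sum>x<q. \<Sum>g<q. \<Sum>i<q. cnj (U$$(k*q+g, i*q+x)) * U$$(l*q+g, i*q+x))"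
    by (rule sum.cong[OF refl], rule sum.swap)
  also have "\<dots> = (\<Sum>g<q. \<Sum>x<q. \<Sum>i<q. cnj (U$$(k*q+g, i*q+x)) * U$$(l*q+g, i*q+x))" by (rule sum.swap)
  also have "\<dots> = (\<Sum>g<q. \<Sum>i<q. \<Sum>x<q. cnj (U$$(k*q+g, i*q+x)) * U$$(l*q+g, i*q+x))"
    by (rule sum.cong[OF refl], rule sum.swap)
  also have "\<dots> = (\<Sum>g<q. (if k = l then 1 else 0))"
  proof (rule sum.cong[OF refl])
    fix g assume g: "g \<in> {..<q}"
    have r: "l*q+g < q*q" "k*q+g < q*q" using lt_qq g k l by auto
    show "(\<Sum>i<q. \<Sum>x<q. cnj (U$$(k*q+g, i*q+x)) * U$$(l*q+g, i*q+x)) = (if k = l then 1 else 0)"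
      using unit_row[OF U r] by (auto simp: sum_split mult.commute)
  qed
  finally show ?thesis using q0 by simp
qed

lemma Km_H1:
  assumes U: "unitary_mat (q*q) U" and q0: "0 < q" and x: "x < q" and y: "y < q"
  shows "(\<Sum>k<q. Km q U k k x y) = (if x = y then 1 else 0)"
proof -
  have "(\<Sum>k<q. Km q U k k x y) = 1 / of_nat q * (\<Sum>k<q. \<Sum>i<q. \<Sum>g<q. cnj (U$$(g*q+k, x*q+i)) * U$$(g*q+k, y*q+i))"
    by (simp add: Km_def sum_distrib_left)
  also have "(\<Sum>k<q. \<Sum>i<q. \<Sum>g<q. cnj (U$$(g*q+k, x*q+i)) * U$$(g*q+k, y*q+i))
     = (\<Sum>i<q. \<Sum>k<q. \<Sum>g<q. cnj (U$$(g*q+k, x*q+i)) * U$$(g*q+k, y*q+i))" by (rule sum.swap)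
  also have "\<dots> = (\<Sum>i<q. \<Sum>g<q. \<Sum>k<q. cnj (U$$(g*q+k, x*q+i)) * U$$(g*q+k, y*q+i))"
    by (rule sum.cong[OF refl], rule sum.swap)
  also have "\<dots> = (\<Sum>i<q. (if x = y then 1 else 0))"
  proof (rule sum.cong[OF refl])
    fix i assume i: "i \<in> {..<q}"
    have r: "x*q+i < q*q" "y*q+i < q*q" using lt_qq i x y by auto
    show "(\<Sum>g<q. \<Sum>k<q. cnj (U$$(g*q+k, x*q+i)) * U$$(g*q+k, y*q+i)) = (if x = y then 1 else 0)"
      using unit_col[OF U r] by (auto simp: sum_split)
  qed
  finally show ?thesis using q0 by simp
qed

lemma Km_H2:
  assumes U: "unitary_mat (q*q) U" and q0: "0 < q" and k: "k < q" and l: "l < q"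
  shows "(\<Sum>x<q. Km q U k l x x) = (if k = l then 1 else 0)"
proof -
  have "(\<Sum>x<q. Km q U k l x x) = 1 / of_nat q * (\<Sum>x<q. \<Sum>i<q. \<Sum>g<q. cnj (U$$(g*q+k, x*q+i)) * U$$(g*q+l, x*q+i))"
    by (simp add: Km_def sum_distrib_left)
  also have "(\<Sum>x<q. \<Sum>i<q. \<Sum>g<q. cnj (U$$(g*q+k, x*q+i)) * U$$(g*q+l, x*q+i))
     = (\<Sum>x<q. \<Sum>g<q. \<Sum>i<q. cnj (U$$(g*q+k, x*q+i)) * U$$(g*q+l, x*q+i))"
    by (rule sum.cong[OF refl], rule sum.swap)
  also have "\<dots> = (\<Sum>g<q. \<Sum>x<q. \<Sum>i<q. cnj (U$$(g*q+k, x*q+i)) * U$$(g*q+l, x*q+i))" by (rule sum.swap)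
  also have "\<dots> = (\<Sum>g<q. (if k = l then 1 else 0))"
  proof (rule sum.cong[OF refl])
    fix g assume g: "g \<in> {..<q}"
    have r: "g*q+l < q*q" "g*q+k < q*q" using lt_qq g k l by auto
    show "(\<Sum>x<q. \<Sum>i<q. cnj (U$$(g*q+k, x*q+i)) * U$$(g*q+l, x*q+i)) = (if k = l then 1 else 0)"
      using unit_row[OF U r] by (auto simp: sum_split mult.commute)
  qed
  finally show ?thesis using q0 by simp
qed


definition Tv :: "nat \<Rightarrow> complex mat \<Rightarrow> real" where
  "Tv q V = Re (mtrace ((realign q V * adj (realign q V)) * (realign q V * adj (realign q V))))"

lemma Ent_Tv: "Ent q V = 1 - Tv q V / (real q ^ 4)"
  by (simp add: Ent_def Tv_def)

definition Ssq :: "nat \<Rightarrow> (nat \<Rightarrow> nat \<Rightarrow> nat \<Rightarrow> nat \<Rightarrow> complex) \<Rightarrow> real" where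
  "Ssq q K = (\<Sum>x<q. \<Sum>y<q. \<Sum>k<q. \<Sum>l<q. (cmod (K k l x y))^2)"

lemma fro_Fmat: "fro (Fmat q K) = Ssq q K"
proof -
  have "fro (Fmat q K) = (\<Sum>s<q*q. \<Sum>c<q*q. (cmod (K (c div q) (c mod q) (s div q) (s mod q)))^2)"
    by (simp add: fro_def Fmat_def)
  also have "\<dots> = Ssq q K"
    by (simp add: sum_split Ssq_def)
  finally show ?thesis .
qed

lemma realign_carrier[simp]: "realign q X \<in> carrier_mat (q*q) (q*q)"
  by (simp add: realign_def)

lemma realign_dims[simp]: "dim_row (realign q X) = q*q" "dim_col (realign q X) = q*q"
  by (simp_all add: realign_def)

lemma swap_carrier[simp]: "swap_op q \<in> carrier_mat (q*q) (q*q)"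
  by (simp add: swap_op_def)

lemma sigma_lt: "(c::nat) < q*q \<Longrightarrow> (c mod q)*q + c div q < q*q"
  using lt_qq[of "c mod q" q "c div q"] divq_lt[of c q] modq_lt[of c q] by auto

lemma mult_swap_entry:
  assumes X: "X \<in> carrier_mat (q*q) (q*q)" and r: "r < q*q" and c: "c < q*q"
  shows "(X * swap_op q) $$ (r,c) = X $$ (r, (c mod q)*q + c div q)"
proof -
  have "(X * swap_op q) $$ (r,c) = (\<Sum>s<q*q. X$$(r,s) * (if s = (c mod q)*q + c div q then 1 else 0))"
    using X r c by (simp add: swap_op_def)
  also have "\<dots> = X $$ (r, (c mod q)*q + c div q)"
    using sigma_lt[OF c] by (simp add: if_distrib[of "\<lambda>t. _ * t"] sum.delta cong: if_cong)
  finally show ?thesis .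
qed

lemma realign_US:
  assumes U: "U \<in> carrier_mat (q*q) (q*q)" and a: "a < q" and b: "b < q" and c: "c < q" and d: "d < q"
  shows "realign q (U * swap_op q) $$ (a*q+b, c*q+d) = U$$(d*q+b, a*q+c)"
proof -
  have r1: "d*q+b < q*q" "c*q+a < q*q" "a*q+b < q*q" "c*q+d < q*q" using lt_qq a b c d by auto
  show ?thesis using a b c d r1 mult_swap_entry[OF U r1(1) r1(2)] by (simp add: realign_def)
qed

lemma herm_trace:
  assumes R: "R \<in> carrier_mat n n"
  shows "Re (mtrace ((R * adj R) * (R * adj R))) = fro (R * adj R)"
proof -
  have "adj (R * adj R) = R * adj R" using adj_mult[OF R adj_carrier[OF R]] by simp
  then show ?thesis using fro_trace[of "R * adj R" n n] R by simp
qed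

lemma Tv_fro1: "Tv q V = fro (realign q V * adj (realign q V))"
  unfolding Tv_def by (rule herm_trace[OF realign_carrier])

lemma Tv_fro2: "Tv q V = fro (adj (realign q V) * realign q V)"
proof -
  let ?R = "realign q V"
  have R: "?R \<in> carrier_mat (q*q) (q*q)" by simp
  have R': "adj ?R \<in> carrier_mat (q*q) (q*q)" by simp
  have "mtrace ((?R * adj ?R) * (?R * adj ?R)) = mtrace (?R * (adj ?R * (?R * adj ?R)))"
    using assoc_mult_mat[OF R R' mult_carrier_mat[OF R R']] by simp
  also have "\<dots> = mtrace ((adj ?R * (?R * adj ?R)) * ?R)"
    by (rule mtrace_comm[OF R]) (rule mult_carrier_mat[OF R' mult_carrier_mat[OF R R']])
  also have "(adj ?R * (?R * adj ?R)) * ?R = (adj ?R * ?R) * (adj ?R * ?R)"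
  proof -
    have c1: "?R * adj ?R \<in> carrier_mat (q*q) (q*q)" using R R' by (rule mult_carrier_mat)
    have c2: "adj ?R * ?R \<in> carrier_mat (q*q) (q*q)" using R' R by (rule mult_carrier_mat)
    have "(adj ?R * (?R * adj ?R)) * ?R = adj ?R * ((?R * adj ?R) * ?R)"
      by (rule assoc_mult_mat[OF R' c1 R])
    also have "(?R * adj ?R) * ?R = ?R * (adj ?R * ?R)" by (rule assoc_mult_mat[OF R R' R])
    also have "adj ?R * (?R * (adj ?R * ?R)) = (adj ?R * ?R) * (adj ?R * ?R)"
      by (rule assoc_mult_mat[symmetric, OF R' R c2])
    finally show ?thesis .
  qed
  finally have "Tv q V = Re (mtrace ((adj ?R * ?R) * (adj ?R * ?R)))" by (simp add: Tv_def)
  also have "\<dots> = fro (adj ?R * ?R)"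
    using herm_trace[OF R'] by simp
  finally show ?thesis .
qed

lemma G_entry:
  assumes U: "U \<in> carrier_mat (q*q) (q*q)" and j: "j < q" and i: "i < q" and j': "j' < q" and i': "i' < q"
  shows "(adj (realign q (U * swap_op q)) * realign q (U * swap_op q)) $$ (j*q+i, j'*q+i') = of_nat q * Kp q U i i' j j'"
proof -
  let ?R = "realign q (U * swap_op q)"
  have r: "j*q+i < q*q" "j'*q+i' < q*q" using lt_qq j i j' i' by auto
  have q0: "0 < q" using j by simp
  have "(adj ?R * ?R) $$ (j*q+i, j'*q+i') = (\<Sum>u<q*q. cnj (?R $$ (u, j*q+i)) * ?R $$ (u, j'*q+i'))"
    using r by simp
  also have "\<dots> = (\<Sum>b<q. \<Sum>a<q. cnj (U$$(i*q+a, b*q+j)) * U$$(i'*q+a, b*q+j'))"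
    using j i j' i' by (simp add: sum_split realign_US[OF U])
  also have "\<dots> = of_nat q * Kp q U i i' j j'"
    using q0 by (simp add: Kp_def)
  finally show ?thesis .
qed

lemma H_entry:
  assumes U: "U \<in> carrier_mat (q*q) (q*q)" and a: "a < q" and b: "b < q" and c: "c < q" and d: "d < q"
  shows "(realign q (U * swap_op q) * adj (realign q (U * swap_op q))) $$ (a*q+b, c*q+d) = of_nat q * Km q U d b c a"
proof -
  let ?R = "realign q (U * swap_op q)"
  have r: "a*q+b < q*q" "c*q+d < q*q" using lt_qq a b c d by auto
  have q0: "0 < q" using a by simp
  have "(?R * adj ?R) $$ (a*q+b, c*q+d) = (\<Sum>u<q*q. ?R $$ (a*q+b, u) * cnj (?R $$ (c*q+d, u)))"
    using r by simp
  also have "\<dots> = (\<Sum>j<q. \<Sum>i<q. cnj (U$$(i*q+d, c*q+j)) * U$$(i*q+b, a*q+j))"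
    using a b c d by (simp add: sum_split realign_US[OF U] mult.commute)
  also have "\<dots> = of_nat q * Km q U d b c a"
    using q0 by (simp add: Km_def)
  finally show ?thesis .
qed

lemma Tv_Kp:
  assumes U: "U \<in> carrier_mat (q*q) (q*q)"
  shows "Tv q (U * swap_op q) = (real q)^2 * Ssq q (Kp q U)"
proof -
  let ?R = "realign q (U * swap_op q)"
  have "Tv q (U * swap_op q) = fro (adj ?R * ?R)" by (rule Tv_fro2)
  also have "\<dots> = (\<Sum>j<q. \<Sum>i<q. \<Sum>j'<q. \<Sum>i'<q. (cmod ((adj ?R * ?R) $$ (j*q+i, j'*q+i')))^2)"
    by (simp add: fro_def sum_split del: mult_entry')
  also have "\<dots> = (\<Sum>j<q. \<Sum>i<q. \<Sum>j'<q. \<Sum>i'<q. (real q)^2 * (cmod (Kp q U i i' j j'))^2)"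
    by (intro sum.cong refl) (simp add: G_entry[OF U] norm_mult power_mult_distrib)
  also have "\<dots> = (real q)^2 * (\<Sum>j<q. \<Sum>i<q. \<Sum>j'<q. \<Sum>i'<q. (cmod (Kp q U i i' j j'))^2)"
    by (simp add: sum_distrib_left)
  also have "(\<Sum>j<q. \<Sum>i<q. \<Sum>j'<q. \<Sum>i'<q. (cmod (Kp q U i i' j j'))^2)
     = (\<Sum>j<q. \<Sum>j'<q. \<Sum>i<q. \<Sum>i'<q. (cmod (Kp q U i i' j j'))^2)"
    by (rule sum.cong[OF refl], rule sum.swap)
  also have "\<dots> = Ssq q (Kp q U)" by (simp add: Ssq_def)
  finally show ?thesis .
qed

lemma Tv_Km:
  assumes U: "U \<in> carrier_mat (q*q) (q*q)"
  shows "Tv q (U * swap_op q) = (real q)^2 * Ssq q (Km q U)"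
proof -
  let ?R = "realign q (U * swap_op q)"
  have "Tv q (U * swap_op q) = fro (?R * adj ?R)" by (rule Tv_fro1)
  also have "\<dots> = (\<Sum>a<q. \<Sum>b<q. \<Sum>c<q. \<Sum>d<q. (cmod ((?R * adj ?R) $$ (a*q+b, c*q+d)))^2)"
    by (simp add: fro_def sum_split del: mult_entry')
  also have "\<dots> = (\<Sum>a<q. \<Sum>b<q. \<Sum>c<q. \<Sum>d<q. (real q)^2 * (cmod (Km q U d b c a))^2)"
    by (intro sum.cong refl) (simp add: H_entry[OF U] norm_mult power_mult_distrib)
  also have "\<dots> = (real q)^2 * (\<Sum>a<q. \<Sum>b<q. \<Sum>c<q. \<Sum>d<q. (cmod (Km q U d b c a))^2)"
    by (simp add: sum_distrib_left)
  also have "(\<Sum>a<q. \<Sum>b<q. \<Sum>c<q. \<Sum>d<q. (cmod (Km q U d b c a))^2)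
     = (\<Sum>a<q. \<Sum>c<q. \<Sum>b<q. \<Sum>d<q. (cmod (Km q U d b c a))^2)"
    by (rule sum.cong[OF refl], rule sum.swap)
  also have "\<dots> = (\<Sum>a<q. \<Sum>c<q. \<Sum>d<q. \<Sum>b<q. (cmod (Km q U d b c a))^2)"
    by (rule sum.cong[OF refl], rule sum.cong[OF refl], rule sum.swap)
  also have "\<dots> = (\<Sum>c<q. \<Sum>a<q. \<Sum>d<q. \<Sum>b<q. (cmod (Km q U d b c a))^2)"
    by (rule sum.swap)
  also have "\<dots> = Ssq q (Km q U)" by (simp add: Ssq_def)
  finally show ?thesis .
qed


lemma mtrace_one[simp]: "mtrace (1\<^sub>m n) = of_nat n"
  by (simp add: mtrace_def)

lemma Tv_unitary_realign:
  assumes "unitary_mat (q*q) (realign q V)"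
  shows "Tv q V = (real q)^2"
proof -
  have "realign q V * adj (realign q V) = 1\<^sub>m (q*q)" using assms by (simp add: unitary_mat_def)
  then show ?thesis by (simp add: Tv_def power2_eq_square)
qed

definition sig :: "nat \<Rightarrow> nat \<Rightarrow> nat" where "sig q c = (c mod q)*q + c div q"

lemma sig_lt: "c < q*q \<Longrightarrow> sig q c < q*q" unfolding sig_def by (rule sigma_lt)

lemma sig_sig: assumes "c < q*q" shows "sig q (sig q c) = c"
proof -
  have "c div q < q" "c mod q < q" using assms divq_lt modq_lt by auto
  then show ?thesis by (simp add: sig_def)
qed

lemma swap_dims[simp]: "dim_row (swap_op q) = q*q" "dim_col (swap_op q) = q*q"
  by (simp_all add: swap_op_def)

lemma swap_entry: "r < q*q \<Longrightarrow> c < q*q \<Longrightarrow> swap_op q $$ (r,c) = (if r = sig q c then 1 else 0)"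
  by (simp add: swap_op_def sig_def)

lemma realign_swap: "realign q (swap_op q) = swap_op q"
proof (rule eq_matI)
  fix r c assume "r < dim_row (swap_op q)" "c < dim_col (swap_op q)"
  then have r: "r < q*q" and c: "c < q*q" by (auto simp: swap_op_def)
  have rq: "r div q < q" "r mod q < q" "c div q < q" "c mod q < q" using r c divq_lt modq_lt by auto
  have a1: "(c mod q)*q + r mod q < q*q" "(c div q)*q + r div q < q*q" using rq lt_qq by auto
  have "realign q (swap_op q) $$ (r,c) = (if (c mod q)*q + r mod q = (r div q)*q + c div q then 1 else 0)"
    using r c a1 rq by (simp add: realign_def swap_entry sig_def)
  also have "((c mod q)*q + r mod q = (r div q)*q + c div q) = (r = sig q c)"
    unfolding sig_def by (metis divmod_simps rq qq_decomp)
  finally show "realign q (swap_op q) $$ (r,c) = swap_op q $$ (r,c)" using r c by (simp add: swap_entry)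
qed (auto simp: swap_op_def)

lemma adj_swap: "adj (swap_op q) = swap_op q"
proof (rule eq_matI)
  fix r c assume "r < dim_row (swap_op q)" "c < dim_col (swap_op q)"
  then have r: "r < q*q" and c: "c < q*q" by (auto simp: swap_op_def)
  have "(c = sig q r) = (r = sig q c)" using sig_sig[OF r] sig_sig[OF c] by metis
  then show "adj (swap_op q) $$ (r,c) = swap_op q $$ (r,c)" using r c by (simp add: swap_entry)
qed (auto simp: swap_op_def)

lemma swap_swap: "swap_op q * swap_op q = 1\<^sub>m (q*q)"
proof (rule eq_matI)
  fix r c assume "r < dim_row (1\<^sub>m (q*q))" "c < dim_col (1\<^sub>m (q*q))"
  then have r: "r < q*q" and c: "c < q*q" by auto
  have "(swap_op q * swap_op q) $$ (r,c) = swap_op q $$ (r, sig q c)"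
    using mult_swap_entry[OF swap_carrier r c] by (simp add: sig_def)
  also have "\<dots> = (if r = c then 1 else 0)" using swap_entry[OF r sig_lt[OF c]] sig_sig[OF c] by simp
  finally show "(swap_op q * swap_op q) $$ (r,c) = 1\<^sub>m (q*q) $$ (r,c)" using r c by simp
qed (auto simp: swap_op_def)

lemma swap_unitary: "unitary_mat (q*q) (swap_op q)"
  by (simp add: unitary_mat_def adj_swap swap_swap)

lemma Tv_swap: "Tv q (swap_op q) = (real q)^2"
  by (rule Tv_unitary_realign) (simp add: realign_swap swap_unitary)

lemma Ent_swap: "Ent q (swap_op q) = 1 - (real q)^2 / real q ^ 4"
  by (simp add: Ent_Tv Tv_swap)

lemma ep_alg:
  fixes p T :: real
  assumes p: "p > 1"
  shows "(p - 1) * (1 - (1 - T / p^2) / (1 - p / p^2)) = T / p - 1"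
proof -
  have p0: "p \<noteq> 0" and p1: "p - 1 \<noteq> 0" using p by auto
  have e: "1 - p / p^2 = (p - 1) / p" using p0 by (simp add: power2_eq_square diff_divide_distrib)
  have "(1 - T / p^2) / ((p - 1) / p) = (1 - T / p^2) * p / (p - 1)" by simp
  then have "(p - 1) * (1 - (1 - T / p^2) / (1 - p / p^2)) = (p - 1) - (1 - T / p^2) * p"
    unfolding e using p1 by (simp add: right_diff_distrib)
  also have "(1 - T / p^2) * p = p - T / p" using p0 by (simp add: power2_eq_square left_diff_distrib)
  finally show ?thesis by simp
qed

lemma ep_formula:
  assumes q2: "q \<ge> 2" and TU: "Tv q U = (real q)^2"
  shows "real (q*q-1) * (1 - ep q U) = Tv q (U * swap_op q) / (real q)^2 - 1"
proof -
  define T where "T = Tv q (U * swap_op q)"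
  define p where "p = (real q)^2"
  have q2': "real q \<ge> 2" using q2 by simp
  have "real q * real q \<ge> 2 * 2" using q2' by (intro mult_mono) auto
  then have p1: "p > 1" unfolding p_def by (simp add: power2_eq_square)
  have p4: "real q ^ 4 = p^2" by (simp add: p_def power_mult[symmetric])
  have "q*q \<ge> 1" using q2 by (simp add: Suc_le_eq)
  then have rq: "real (q*q-1) = p - 1" unfolding p_def by (simp add: of_nat_diff power2_eq_square)
  have ES: "Ent q (swap_op q) = 1 - p / p^2" unfolding Ent_swap p4 p_def[symmetric] ..
  have EU: "Ent q U = 1 - p / p^2" unfolding Ent_Tv TU p4 p_def[symmetric] ..
  have EUS: "Ent q (U * swap_op q) = 1 - T / p^2" by (simp add: Ent_Tv T_def p4)
  have "real (q*q-1) * (1 - ep q U) = (p - 1) * (1 - (1 - T / p^2) / (1 - p / p^2))"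
    unfolding rq ep_def ES EU EUS by simp
  also have "\<dots> = T / p - 1"
    using ep_alg[OF p1, of T] by simp
  finally show ?thesis by (simp add: T_def p_def)
qed

lemma core:
  assumes q2: "q \<ge> 2" and U: "unitary_mat (q*q) U" and TU: "Tv q U = (real q)^2"
    and M: "M \<in> {Mplus q U, Mminus q U}"
    and cp: "char_poly (restr_traceless q M) = (\<Prod>a\<leftarrow>lams. [:-a, 1:])"
  shows "(\<Sum>a\<leftarrow>lams. (cmod a)^2) \<le> real (q*q-1) * (1 - ep q U)"
proof -
  have Uc: "U \<in> carrier_mat (q*q) (q*q)" using U by (simp add: unitary_mat_def)
  have q0: "0 < q" using q2 by simp
  obtain K where K: "restr_traceless q M = restr_traceless q (kmap q K)"
    and H1: "\<And>x y. x < q \<Longrightarrow> y < q \<Longrightarrow> (\<Sum>k<q. K k k x y) = (if x = y then 1 else 0)"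
    and H2: "\<And>k l. k < q \<Longrightarrow> l < q \<Longrightarrow> (\<Sum>x<q. K k l x x) = (if k = l then 1 else 0)"
    and SK: "Tv q (U * swap_op q) = (real q)^2 * Ssq q K"
  proof (cases "M = Mplus q U")
    case True
    show ?thesis
    proof (rule that[of "Kp q U"])
      show "restr_traceless q M = restr_traceless q (kmap q (Kp q U))"
        unfolding True by (rule restr_cong) (rule Mplus_kmap[OF Uc tb_carrier])
    qed (use Kp_H1[OF U q0] Kp_H2[OF U q0] Tv_Kp[OF Uc] in auto)
  next
    case False
    then have Mm: "M = Mminus q U" using M by auto
    show ?thesis
    proof (rule that[of "Km q U"])
      show "restr_traceless q M = restr_traceless q (kmap q (Km q U))"
        unfolding Mm by (rule restr_cong) (rule Mminus_kmap[OF Uc tb_carrier])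
    qed (use Km_H1[OF U q0] Km_H2[OF U q0] Tv_Km[OF Uc] in auto)
  qed
  have "char_poly (Fmat q K) = [:-1, 1:] * char_poly (restr_traceless q (kmap q K))"
    by (rule block_charpoly[OF q0 H1 H2])
  also have "\<dots> = (\<Prod>a\<leftarrow>(1 # lams). [:-a, 1:])" using cp K by simp
  finally have cpF: "char_poly (Fmat q K) = (\<Prod>a\<leftarrow>(1 # lams). [:-a, 1:])" .
  have "(\<Sum>a\<leftarrow>(1 # lams). (cmod a)^2) \<le> fro (Fmat q K)"
    by (rule schur_fro[OF Fmat_carrier cpF])
  then have "1 + (\<Sum>a\<leftarrow>lams. (cmod a)^2) \<le> Ssq q K" by (simp add: fro_Fmat)
  moreover have "real (q*q-1) * (1 - ep q U) = Ssq q K - 1"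
    using ep_formula[OF q2 TU] SK q0 by simp
  ultimately show ?thesis by simp
qed


lemma tens_dims[simp]: "dim_row (tens q A B) = q*q" "dim_col (tens q A B) = q*q"
  by (simp_all add: tens_def)

lemma tens_entry':
  "r < q*q \<Longrightarrow> c < q*q \<Longrightarrow> tens q A B $$ (r,c) = A $$ (r div q, c div q) * B $$ (r mod q, c mod q)"
  by (simp add: tens_def)

lemma tens_mult:
  assumes A: "A \<in> carrier_mat q q" and B: "B \<in> carrier_mat q q" and C: "C \<in> carrier_mat q q" and D: "D \<in> carrier_mat q q"
  shows "tens q A B * tens q C D = tens q (A*C) (B*D)"
proof (rule eq_matI)
  fix r c assume "r < dim_row (tens q (A*C) (B*D))" "c < dim_col (tens q (A*C) (B*D))"
  then have r: "r < q*q" and c: "c < q*q" by auto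
  have rq: "r div q < q" "r mod q < q" "c div q < q" "c mod q < q" using r c divq_lt modq_lt by auto
  have "(tens q A B * tens q C D) $$ (r,c) = (\<Sum>u<q*q. tens q A B $$ (r,u) * tens q C D $$ (u,c))"
    using r c by simp
  also have "\<dots> = (\<Sum>a<q. \<Sum>b<q. (A$$(r div q, a) * C$$(a, c div q)) * (B$$(r mod q, b) * D$$(b, c mod q)))"
    using r c lt_qq by (simp add: sum_split tens_entry' mult_ac)
  also have "\<dots> = (\<Sum>a<q. A$$(r div q, a) * C$$(a, c div q)) * (\<Sum>b<q. B$$(r mod q, b) * D$$(b, c mod q))"
    by (simp add: sum_product)
  also have "\<dots> = tens q (A*C) (B*D) $$ (r,c)"
    using r c rq A B C D by (simp add: tens_entry')
  finally show "(tens q A B * tens q C D) $$ (r,c) = tens q (A*C) (B*D) $$ (r,c)" .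
qed auto

lemma adj_tens:
  assumes A: "A \<in> carrier_mat q q" and B: "B \<in> carrier_mat q q"
  shows "adj (tens q A B) = tens q (adj A) (adj B)"
proof (rule eq_matI)
  fix r c assume "r < dim_row (tens q (adj A) (adj B))" "c < dim_col (tens q (adj A) (adj B))"
  then have r: "r < q*q" and c: "c < q*q" by auto
  have rq: "r div q < q" "r mod q < q" "c div q < q" "c mod q < q" using r c divq_lt modq_lt by auto
  show "adj (tens q A B) $$ (r,c) = tens q (adj A) (adj B) $$ (r,c)"
    using r c rq A B by (simp add: tens_entry')
qed auto

lemma tens_one: "tens q (1\<^sub>m q) (1\<^sub>m q) = 1\<^sub>m (q*q)"
proof (rule eq_matI)
  fix r c assume "r < dim_row (1\<^sub>m (q*q))" "c < dim_col (1\<^sub>m (q*q))"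
  then have r: "r < q*q" and c: "c < q*q" by auto
  have rq: "r div q < q" "r mod q < q" "c div q < q" "c mod q < q" using r c divq_lt modq_lt by auto
  have "(r div q = c div q \<and> r mod q = c mod q) = (r = c)" by (metis qq_decomp)
  then show "tens q (1\<^sub>m q) (1\<^sub>m q) $$ (r,c) = 1\<^sub>m (q*q) $$ (r,c)"
    using r c rq by (auto simp: tens_entry')
qed auto

lemma unitary_tens:
  assumes A: "unitary_mat q A" and B: "unitary_mat q B"
  shows "unitary_mat (q*q) (tens q A B)"
proof -
  have Ac: "A \<in> carrier_mat q q" and Bc: "B \<in> carrier_mat q q" using A B by (auto simp: unitary_mat_def)
  show ?thesis
    unfolding unitary_mat_def adj_tens[OF Ac Bc]
    using tens_mult[OF Ac Bc adj_carrier[OF Ac] adj_carrier[OF Bc]]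
      tens_mult[OF adj_carrier[OF Ac] adj_carrier[OF Bc] Ac Bc] A B tens_one
    by (simp add: unitary_mat_def)
qed

lemma adj_transpose:
  "adj (transpose_mat A) = transpose_mat (adj A)"
  by (rule eq_matI) auto

lemma unitary_transpose:
  assumes A: "unitary_mat n A"
  shows "unitary_mat n (transpose_mat A)"
proof -
  have Ac: "A \<in> carrier_mat n n" and e1: "A * adj A = 1\<^sub>m n" and e2: "adj A * A = 1\<^sub>m n"
    using A by (auto simp: unitary_mat_def)
  have "transpose_mat A * transpose_mat (adj A) = transpose_mat (adj A * A)"
    by (rule transpose_mult[symmetric, OF adj_carrier[OF Ac] Ac])
  moreover have "transpose_mat (adj A) * transpose_mat A = transpose_mat (A * adj A)"
    by (rule transpose_mult[symmetric, OF Ac adj_carrier[OF Ac]])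
  ultimately show ?thesis using e1 e2 Ac by (simp add: unitary_mat_def adj_transpose)
qed

lemma unitary_mult:
  assumes A: "unitary_mat n A" and B: "unitary_mat n B"
  shows "unitary_mat n (A * B)"
proof -
  have Ac: "A \<in> carrier_mat n n" and a1: "A * adj A = 1\<^sub>m n" and a2: "adj A * A = 1\<^sub>m n"
    using A by (auto simp: unitary_mat_def)
  have Bc: "B \<in> carrier_mat n n" and b1: "B * adj B = 1\<^sub>m n" and b2: "adj B * B = 1\<^sub>m n"
    using B by (auto simp: unitary_mat_def)
  have Ac': "adj A \<in> carrier_mat n n" and Bc': "adj B \<in> carrier_mat n n" using Ac Bc by auto
  have adjAB: "adj (A * B) = adj B * adj A" by (rule adj_mult[OF Ac Bc])
  have "A * B * (adj B * adj A) = A * (B * (adj B * adj A))" by (rule assoc_mult_mat[OF Ac Bc mult_carrier_mat[OF Bc' Ac']])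
  also have "B * (adj B * adj A) = (B * adj B) * adj A" by (rule assoc_mult_mat[symmetric, OF Bc Bc' Ac'])
  finally have 1: "A * B * adj (A * B) = 1\<^sub>m n" using adjAB b1 a1 left_mult_one_mat[OF Ac'] by simp
  have "adj B * adj A * (A * B) = adj B * (adj A * (A * B))" by (rule assoc_mult_mat[OF Bc' Ac' mult_carrier_mat[OF Ac Bc]])
  also have "adj A * (A * B) = (adj A * A) * B" by (rule assoc_mult_mat[symmetric, OF Ac' Ac Bc])
  finally have 2: "adj (A * B) * (A * B) = 1\<^sub>m n" using adjAB a2 b2 left_mult_one_mat[OF Bc] by simp
  show ?thesis using 1 2 Ac Bc by (simp add: unitary_mat_def)
qed

lemma realign_local:
  assumes A: "A \<in> carrier_mat q q" and B: "B \<in> carrier_mat q q" and C: "C \<in> carrier_mat q q" and D: "D \<in> carrier_mat q q"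
    and X: "X \<in> carrier_mat (q*q) (q*q)"
  shows "realign q (tens q A B * X * tens q C D) = tens q (transpose_mat D) B * realign q X * tens q C (transpose_mat A)"
proof (rule eq_matI)
  fix r c assume "r < dim_row (tens q (transpose_mat D) B * realign q X * tens q C (transpose_mat A))"
    "c < dim_col (tens q (transpose_mat D) B * realign q X * tens q C (transpose_mat A))"
  then have r: "r < q*q" and c: "c < q*q" by auto
  define be where "be = r div q"
  define al where "al = r mod q"
  define j where "j = c div q"
  define i where "i = c mod q"
  have idx: "be < q" "al < q" "j < q" "i < q" using r c divq_lt modq_lt by (auto simp: be_def al_def j_def i_def)
  have rr: "r = be*q+al" "c = j*q+i" by (simp_all add: be_def al_def j_def i_def)
  have i1: "i*q+al < q*q" "j*q+be < q*q" using lt_qq idx by auto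
  let ?F = "\<lambda>c1 a1 d1 b1. A$$(i,a1) * B$$(al,b1) * X$$(a1*q+b1, c1*q+d1) * C$$(c1,j) * D$$(d1,be)"
  have "realign q (tens q A B * X * tens q C D) $$ (r,c) = (tens q A B * X * tens q C D) $$ (i*q+al, j*q+be)"
    using r c by (simp add: realign_def i_def al_def j_def be_def)
  also have "\<dots> = (\<Sum>c1<q. \<Sum>d1<q. (\<Sum>a1<q. \<Sum>b1<q. A$$(i,a1) * B$$(al,b1) * X$$(a1*q+b1, c1*q+d1)) * (C$$(c1,j) * D$$(d1,be)))"
    using i1 idx X lt_qq by (simp add: sum_split tens_entry)
  also have "\<dots> = (\<Sum>c1<q. \<Sum>d1<q. \<Sum>a1<q. \<Sum>b1<q. ?F c1 a1 d1 b1)"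
    by (simp add: sum_distrib_left sum_distrib_right mult_ac)
  also have "\<dots> = (\<Sum>c1<q. \<Sum>a1<q. \<Sum>d1<q. \<Sum>b1<q. ?F c1 a1 d1 b1)"
    by (rule sum.cong[OF refl], rule sum.swap)
  also have "\<dots> = (\<Sum>c1<q. \<Sum>a1<q. (\<Sum>d1<q. \<Sum>b1<q. D$$(d1,be) * B$$(al,b1) * X$$(a1*q+b1, c1*q+d1)) * (C$$(c1,j) * A$$(i,a1)))"
    by (simp add: sum_distrib_left sum_distrib_right mult_ac)
  also have "\<dots> = (tens q (transpose_mat D) B * realign q X * tens q C (transpose_mat A)) $$ (be*q+al, j*q+i)"
    using idx X A D lt_qq by (simp add: sum_split tens_entry realign_def)
  finally show "realign q (tens q A B * X * tens q C D) $$ (r,c) = (tens q (transpose_mat D) B * realign q X * tens q C (transpose_mat A)) $$ (r,c)"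
    using rr by simp
qed auto

lemma Tv_conj:
  assumes W1: "unitary_mat (q*q) W1" and W2: "unitary_mat (q*q) W2"
    and RY: "realign q Y = W1 * realign q X * W2"
  shows "Tv q Y = Tv q X"
proof -
  let ?N = "q*q"
  let ?R = "realign q X"
  have R: "?R \<in> carrier_mat ?N ?N" by simp
  have R': "adj ?R \<in> carrier_mat ?N ?N" by simp
  have W1c: "W1 \<in> carrier_mat ?N ?N" and w1: "W1 * adj W1 = 1\<^sub>m ?N" using W1 by (auto simp: unitary_mat_def)
  have W2c: "W2 \<in> carrier_mat ?N ?N" and w2: "W2 * adj W2 = 1\<^sub>m ?N" using W2 by (auto simp: unitary_mat_def)
  have W1c': "adj W1 \<in> carrier_mat ?N ?N" and W2c': "adj W2 \<in> carrier_mat ?N ?N" using W1c W2c by auto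
  have P: "W1 * ?R \<in> carrier_mat ?N ?N" by (rule mult_carrier_mat[OF W1c R])
  have Z: "adj ?R * adj W1 \<in> carrier_mat ?N ?N" by (rule mult_carrier_mat[OF R' W1c'])
  have H: "?R * adj ?R \<in> carrier_mat ?N ?N" by (rule mult_carrier_mat[OF R R'])
  have adjY: "adj (W1 * ?R * W2) = adj W2 * (adj ?R * adj W1)"
    using adj_mult[OF P W2c] adj_mult[OF W1c R] by simp
  have "(W1 * ?R * W2) * adj (W1 * ?R * W2) = (W1 * ?R) * (W2 * (adj W2 * (adj ?R * adj W1)))"
    unfolding adjY by (rule assoc_mult_mat[OF P W2c mult_carrier_mat[OF W2c' Z]])
  also have "W2 * (adj W2 * (adj ?R * adj W1)) = (W2 * adj W2) * (adj ?R * adj W1)"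
    by (rule assoc_mult_mat[symmetric, OF W2c W2c' Z])
  also have "\<dots> = adj ?R * adj W1" using w2 left_mult_one_mat[OF Z] by simp
  also have "(W1 * ?R) * (adj ?R * adj W1) = W1 * (?R * (adj ?R * adj W1))"
    by (rule assoc_mult_mat[OF W1c R Z])
  also have "?R * (adj ?R * adj W1) = (?R * adj ?R) * adj W1"
    by (rule assoc_mult_mat[symmetric, OF R R' W1c'])
  also have "W1 * ((?R * adj ?R) * adj W1) = W1 * (?R * adj ?R) * adj W1"
    by (rule assoc_mult_mat[symmetric, OF W1c H W1c'])
  finally have eq: "(W1 * ?R * W2) * adj (W1 * ?R * W2) = adj (adj W1) * (?R * adj ?R) * adj W1" by simp
  have NN: "adj (adj W1) * adj W1 = 1\<^sub>m ?N" using w1 by simp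
  have "Tv q Y = fro ((W1 * ?R * W2) * adj (W1 * ?R * W2))" using Tv_fro1[of q Y] RY by simp
  also have "\<dots> = fro (?R * adj ?R)" unfolding eq by (rule fro_unitary_conj[OF W1c' NN H])
  also have "\<dots> = Tv q X" using Tv_fro1[of q X] by simp
  finally show ?thesis .
qed

lemma Tv_local:
  assumes A: "unitary_mat q A" and B: "unitary_mat q B" and C: "unitary_mat q C" and D: "unitary_mat q D"
    and X: "X \<in> carrier_mat (q*q) (q*q)"
  shows "Tv q (tens q A B * X * tens q C D) = Tv q X"
proof -
  have Ac: "A \<in> carrier_mat q q" "B \<in> carrier_mat q q" "C \<in> carrier_mat q q" "D \<in> carrier_mat q q"
    using A B C D by (auto simp: unitary_mat_def)
  show ?thesis
    by (rule Tv_conj[OF unitary_tens[OF unitary_transpose[OF D] B] unitary_tens[OF C unitary_transpose[OF A]]])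
       (rule realign_local[OF Ac X])
qed

lemma swap_mult_entry:
  assumes X: "X \<in> carrier_mat (q*q) (q*q)" and r: "r < q*q" and c: "c < q*q"
  shows "(swap_op q * X) $$ (r,c) = X $$ (sig q r, c)"
proof -
  have "(swap_op q * X) $$ (r,c) = (\<Sum>s<q*q. (if s = sig q r then X $$ (s,c) else 0))"
  proof -
    have "(swap_op q * X) $$ (r,c) = (\<Sum>s<q*q. swap_op q $$ (r,s) * X $$ (s,c))" using X r c by simp
    also have "\<dots> = (\<Sum>s<q*q. (if s = sig q r then X $$ (s,c) else 0))"
    proof (rule sum.cong[OF refl])
      fix s assume s: "s \<in> {..<q*q}"
      have "(r = sig q s) = (s = sig q r)" using sig_sig[OF r] sig_sig[of s q] s by auto
      then show "swap_op q $$ (r,s) * X $$ (s,c) = (if s = sig q r then X $$ (s,c) else 0)"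
        using s r by (simp add: swap_entry)
    qed
    finally show ?thesis .
  qed
  also have "\<dots> = X $$ (sig q r, c)" using sig_lt[OF r] by (simp add: sum.delta)
  finally show ?thesis .
qed

lemma tens_swap:
  "tens q A B * swap_op q = swap_op q * tens q B A"
proof (rule eq_matI)
  fix r c assume "r < dim_row (swap_op q * tens q B A)" "c < dim_col (swap_op q * tens q B A)"
  then have r: "r < q*q" and c: "c < q*q" by auto
  have rq: "r div q < q" "r mod q < q" "c div q < q" "c mod q < q" using r c divq_lt modq_lt by auto
  have "(tens q A B * swap_op q) $$ (r,c) = tens q A B $$ (r, sig q c)"
    using mult_swap_entry[OF tens_carrier r c] by (simp add: sig_def)
  also have "\<dots> = A $$ (r div q, c mod q) * B $$ (r mod q, c div q)"
    using r sig_lt[OF c] rq by (simp add: tens_entry' sig_def)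
  also have "\<dots> = tens q B A $$ (sig q r, c)"
    using c sig_lt[OF r] rq by (simp add: tens_entry' sig_def)
  also have "\<dots> = (swap_op q * tens q B A) $$ (r,c)"
    using swap_mult_entry[OF tens_carrier r c] by simp
  finally show "(tens q A B * swap_op q) $$ (r,c) = (swap_op q * tens q B A) $$ (r,c)" .
qed auto


lemma prod_root:
  fixes z :: complex
  shows "poly (\<Prod>a\<leftarrow>xs. [:-a, 1:]) z = 0 \<Longrightarrow> z \<in> set xs"
  by (induct xs) auto

lemma len_lams:
  assumes "char_poly (restr_traceless q M) = (\<Prod>a\<leftarrow>lams. [:-a, 1:])"
  shows "length lams = q*q-1"
proof -
  have "degree (char_poly (restr_traceless q M)) = q*q-1"
    using degree_monic_char_poly[OF restr_carrier] by blast
  then show ?thesis using assms degree_linear_factors[of uminus lams] by simp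
qed

lemma sum_list_map_nth: "sum_list (map f xs) = (\<Sum>i<length xs. f (xs ! i))"
  by (simp add: sum_list_sum_nth lessThan_atLeast0)

lemma ep_local:
  assumes U: "U \<in> carrier_mat (q*q) (q*q)"
    and u1: "unitary_mat q u1" and u2: "unitary_mat q u2" and v1: "unitary_mat q v1" and v2: "unitary_mat q v2"
  shows "Tv q (tens q u1 u2 * U * tens q v1 v2) = Tv q U"
    and "ep q (tens q u1 u2 * U * tens q v1 v2) = ep q U"
proof -
  show t1: "Tv q (tens q u1 u2 * U * tens q v1 v2) = Tv q U" by (rule Tv_local[OF u1 u2 v1 v2 U])
  have S: "swap_op q \<in> carrier_mat (q*q) (q*q)" by simp
  have P: "tens q u1 u2 * U \<in> carrier_mat (q*q) (q*q)" by (rule mult_carrier_mat[OF tens_carrier U])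
  have "tens q u1 u2 * U * tens q v1 v2 * swap_op q = tens q u1 u2 * U * (tens q v1 v2 * swap_op q)"
    by (rule assoc_mult_mat[OF P tens_carrier S])
  also have "\<dots> = tens q u1 u2 * U * (swap_op q * tens q v2 v1)" by (simp add: tens_swap)
  also have "\<dots> = tens q u1 u2 * U * swap_op q * tens q v2 v1"
    by (rule assoc_mult_mat[symmetric, OF P S tens_carrier])
  also have "tens q u1 u2 * U * swap_op q = tens q u1 u2 * (U * swap_op q)"
    by (rule assoc_mult_mat[OF tens_carrier U S])
  finally have eq: "tens q u1 u2 * U * tens q v1 v2 * swap_op q = tens q u1 u2 * (U * swap_op q) * tens q v2 v1" .
  have t2: "Tv q (tens q u1 u2 * U * tens q v1 v2 * swap_op q) = Tv q (U * swap_op q)"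
    unfolding eq by (rule Tv_local[OF u1 u2 v2 v1 mult_carrier_mat[OF U S]])
  show "ep q (tens q u1 u2 * U * tens q v1 v2) = ep q U"
    unfolding ep_def Ent_Tv t1 t2 ..
qed

lemma kbound:
  assumes sorted: "sorted_wrt (\<lambda>x y. cmod x \<ge> cmod y) lams" and len: "length lams = n"
    and S: "(\<Sum>i<n. (cmod (lams ! i))^2) \<le> S0"
    and k: "1 \<le> k" "k \<le> n"
  shows "real k * (cmod (lams ! (k-1)))^2 \<le> S0"
proof -
  have "real k * (cmod (lams ! (k-1)))^2 = (\<Sum>i<k. (cmod (lams ! (k-1)))^2)" by simp
  also have "\<dots> \<le> (\<Sum>i<k. (cmod (lams ! i))^2)"
  proof (rule sum_mono)
    fix i assume i: "i \<in> {..<k}"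
    show "(cmod (lams ! (k-1)))^2 \<le> (cmod (lams ! i))^2"
    proof (cases "i = k-1")
      case False
      then have "i < k-1" using i by auto
      then have "cmod (lams ! (k-1)) \<le> cmod (lams ! i)"
        using sorted_wrt_nth_less[OF sorted, of i "k-1"] len k by auto
      then show ?thesis by (simp add: power_mono)
    qed simp
  qed
  also have "\<dots> \<le> (\<Sum>i<n. (cmod (lams ! i))^2)"
    by (rule sum_mono2) (use k in auto)
  finally show ?thesis using S by simp
qed

theorem mainTheorem3:
  fixes q :: nat and U :: "complex mat"
  assumes q2: "q \<ge> 2"
    and du: "dual_unitary q U"
  shows
    "(\<forall>M \<in> {Mplus q U, Mminus q U}. \<forall>lams. nontriv_eigs_sorted q M lams \<longrightarrow>
        (\<Sum>i<q*q-1. (cmod (lams ! i))^2) \<le> real (q*q-1) * (1 - ep q U)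
      \<and> (\<forall>k\<in>{1..q*q-1}. cmod (lams ! (k-1)) \<le>
            sqrt (1 - ep q U) * sqrt (real (q*q-1)) / sqrt (real k))
      \<and> cmod (lams ! (q*q-2)) \<le> sqrt (1 - ep q U)
      \<and> cmod (lams ! 0) \<le> sqrt (1 - ep q U) * sqrt (real (q*q-1))
      \<and> (\<forall>k\<in>{1..q*q-1}. ep q U > 1 - real k / real (q*q-1) \<longrightarrow>
            (\<forall>j\<in>{k..q*q-1}. cmod (lams ! (j-1)) < 1)))
   \<and> (ep q U > real (q*q-2) / real (q*q-1) \<longrightarrow>
      (\<forall>u1 u2 v1 v2. unitary_mat q u1 \<and> unitary_mat q u2 \<and> unitary_mat q v1 \<and> unitary_mat q v2 \<longrightarrow>
         (let U' = tens q u1 u2 * U * tens q v1 v2 in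
          \<forall>M \<in> {Mplus q U', Mminus q U'}. \<forall>z. eigenvalue (restr_traceless q M) z \<longrightarrow> cmod z < 1)))"
proof -
  have Uu: "unitary_mat (q*q) U" and UR: "unitary_mat (q*q) (realign q U)"
    using du by (auto simp: dual_unitary_def)
  have Uc: "U \<in> carrier_mat (q*q) (q*q)" using Uu by (simp add: unitary_mat_def)
  have TU: "Tv q U = (real q)^2" by (rule Tv_unitary_realign[OF UR])
  define n where "n = q*q-1"
  have qq4: "q*q \<ge> 4" using q2 mult_le_mono[OF q2 q2] by simp
  have n1: "n \<ge> 1" using qq4 by (simp add: n_def)
  have rn: "real n > 0" using n1 by simp
  have part1: "\<forall>M \<in> {Mplus q U, Mminus q U}. \<forall>lams. nontriv_eigs_sorted q M lams \<longrightarrow>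
        (\<Sum>i<q*q-1. (cmod (lams ! i))^2) \<le> real (q*q-1) * (1 - ep q U)
      \<and> (\<forall>k\<in>{1..q*q-1}. cmod (lams ! (k-1)) \<le>
            sqrt (1 - ep q U) * sqrt (real (q*q-1)) / sqrt (real k))
      \<and> cmod (lams ! (q*q-2)) \<le> sqrt (1 - ep q U)
      \<and> cmod (lams ! 0) \<le> sqrt (1 - ep q U) * sqrt (real (q*q-1))
      \<and> (\<forall>k\<in>{1..q*q-1}. ep q U > 1 - real k / real (q*q-1) \<longrightarrow>
            (\<forall>j\<in>{k..q*q-1}. cmod (lams ! (j-1)) < 1))"
  proof (intro ballI allI impI)
    fix M lams assume M: "M \<in> {Mplus q U, Mminus q U}" and ne: "nontriv_eigs_sorted q M lams"
    have cp: "char_poly (restr_traceless q M) = (\<Prod>a\<leftarrow>lams. [:-a, 1:])"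
      and sorted: "sorted_wrt (\<lambda>x y. cmod x \<ge> cmod y) lams"
      using ne by (auto simp: nontriv_eigs_sorted_def)
    have len: "length lams = n" using len_lams[OF cp] by (simp add: n_def)
    define S0 where "S0 = real n * (1 - ep q U)"
    have S: "(\<Sum>i<n. (cmod (lams ! i))^2) \<le> S0"
      using core[OF q2 Uu TU M cp] len by (simp add: sum_list_map_nth S0_def n_def)
    have kb: "real k * (cmod (lams ! (k-1)))^2 \<le> S0" if "1 \<le> k" "k \<le> n" for k
      by (rule kbound[OF sorted len S that])
    have bound: "cmod (lams ! (k-1)) \<le> sqrt (1 - ep q U) * sqrt (real n) / sqrt (real k)"
      if k: "1 \<le> k" "k \<le> n" for k
    proof -
      have rk: "real k > 0" using k by simp
      have "(cmod (lams ! (k-1)))^2 \<le> S0 / real k"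
        using kb[OF k] rk by (simp add: field_simps)
      then have "cmod (lams ! (k-1)) \<le> sqrt (S0 / real k)" by (rule real_le_rsqrt)
      also have "sqrt (S0 / real k) = sqrt (1 - ep q U) * sqrt (real n) / sqrt (real k)"
        by (simp add: S0_def real_sqrt_mult real_sqrt_divide mult.commute)
      finally show ?thesis .
    qed
    show "(\<Sum>i<q*q-1. (cmod (lams ! i))^2) \<le> real (q*q-1) * (1 - ep q U)
      \<and> (\<forall>k\<in>{1..q*q-1}. cmod (lams ! (k-1)) \<le>
            sqrt (1 - ep q U) * sqrt (real (q*q-1)) / sqrt (real k))
      \<and> cmod (lams ! (q*q-2)) \<le> sqrt (1 - ep q U)
      \<and> cmod (lams ! 0) \<le> sqrt (1 - ep q U) * sqrt (real (q*q-1))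
      \<and> (\<forall>k\<in>{1..q*q-1}. ep q U > 1 - real k / real (q*q-1) \<longrightarrow>
            (\<forall>j\<in>{k..q*q-1}. cmod (lams ! (j-1)) < 1))"
    proof (intro conjI ballI impI)
      show "(\<Sum>i<q*q-1. (cmod (lams ! i))^2) \<le> real (q*q-1) * (1 - ep q U)"
        using S by (simp add: S0_def n_def)
    next
      fix k assume "k \<in> {1..q*q-1}"
      then show "cmod (lams ! (k-1)) \<le> sqrt (1 - ep q U) * sqrt (real (q*q-1)) / sqrt (real k)"
        using bound[of k] by (simp add: n_def)
    next
      have "q*q-2 = n-1" by (simp add: n_def)
      moreover have "sqrt (1 - ep q U) * sqrt (real n) / sqrt (real n) = sqrt (1 - ep q U)"
        using rn by simp
      ultimately show "cmod (lams ! (q*q-2)) \<le> sqrt (1 - ep q U)"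
        using bound[of n] n1 by simp
    next
      show "cmod (lams ! 0) \<le> sqrt (1 - ep q U) * sqrt (real (q*q-1))"
        using bound[of 1] n1 by (simp add: n_def)
    next
      fix k j assume k: "k \<in> {1..q*q-1}" and epk: "ep q U > 1 - real k / real (q*q-1)" and j: "j \<in> {k..q*q-1}"
      have kn: "1 \<le> k" "k \<le> n" "k \<le> j" "j \<le> n" using k j by (auto simp: n_def)
      have "1 - ep q U < real k / real n" using epk by (simp add: n_def)
      then have "S0 < real k" using rn by (simp add: S0_def field_simps)
      then have "real j * (cmod (lams ! (j-1)))^2 < real k" using kb[of j] kn by simp
      also have "real k \<le> real j" using kn by simp
      finally have "real j * (cmod (lams ! (j-1)))^2 < real j * 1" by simp
      then have "(cmod (lams ! (j-1)))^2 < 1" using kn by (simp add: mult_less_cancel_left)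
      then show "cmod (lams ! (j-1)) < 1" by (simp add: power_less_one_iff abs_square_less_1)
    qed
  qed
  have part2: "ep q U > real (q*q-2) / real (q*q-1) \<longrightarrow>
      (\<forall>u1 u2 v1 v2. unitary_mat q u1 \<and> unitary_mat q u2 \<and> unitary_mat q v1 \<and> unitary_mat q v2 \<longrightarrow>
         (let U' = tens q u1 u2 * U * tens q v1 v2 in
          \<forall>M \<in> {Mplus q U', Mminus q U'}. \<forall>z. eigenvalue (restr_traceless q M) z \<longrightarrow> cmod z < 1))"
  proof (intro impI allI)
    fix u1 u2 v1 v2
    assume epb: "ep q U > real (q*q-2) / real (q*q-1)"
      and us: "unitary_mat q u1 \<and> unitary_mat q u2 \<and> unitary_mat q v1 \<and> unitary_mat q v2"
    then have u1: "unitary_mat q u1" and u2: "unitary_mat q u2" and v1: "unitary_mat q v1" and v2: "unitary_mat q v2"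
      by auto
    define U' where "U' = tens q u1 u2 * U * tens q v1 v2"
    have U'u: "unitary_mat (q*q) U'"
      unfolding U'_def by (intro unitary_mult unitary_tens Uu u1 u2 v1 v2)
    have TU': "Tv q U' = (real q)^2" using ep_local(1)[OF Uc u1 u2 v1 v2] TU by (simp add: U'_def)
    have epU': "ep q U' = ep q U" using ep_local(2)[OF Uc u1 u2 v1 v2] by (simp add: U'_def)
    have "\<forall>M \<in> {Mplus q U', Mminus q U'}. \<forall>z. eigenvalue (restr_traceless q M) z \<longrightarrow> cmod z < 1"
    proof (intro ballI allI impI)
      fix M z assume M: "M \<in> {Mplus q U', Mminus q U'}" and ev: "eigenvalue (restr_traceless q M) z"
      obtain lams where cp: "char_poly (restr_traceless q M) = (\<Prod>a\<leftarrow>lams. [:-a, 1:])"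
        using char_poly_factorized[OF restr_carrier] by blast
      have "poly (char_poly (restr_traceless q M)) z = 0"
        using ev eigenvalue_root_char_poly[OF restr_carrier] by blast
      then have zin: "z \<in> set lams" using cp prod_root by metis
      have sb: "(\<Sum>a\<leftarrow>lams. (cmod a)^2) \<le> real n * (1 - ep q U)"
        using core[OF q2 U'u TU' M cp] epU' by (simp add: n_def)
      have zs: "(cmod z)^2 \<le> (\<Sum>a\<leftarrow>lams. (cmod a)^2)"
        using zin by (intro member_le_sum_list) auto
      have lt1: "real n * (1 - ep q U) < 1"
      proof -
        have e1: "q*q-2 = n-1" by (simp add: n_def)
        have "real (n-1) = real n - 1" using n1 by (simp add: of_nat_diff)
        then have "real (q*q-2) = real n - 1" using e1 by simp
        then have "ep q U > (real n - 1) / real n" using epb by (simp add: n_def)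
        then have "real n * ep q U > real n - 1" using rn by (simp add: field_simps)
        then show ?thesis by (simp add: algebra_simps)
      qed
      have "(cmod z)^2 < 1" using zs sb lt1 by linarith
      then show "cmod z < 1" by (simp add: power_less_one_iff abs_square_less_1)
    qed
    then show "let U' = tens q u1 u2 * U * tens q v1 v2 in
          \<forall>M \<in> {Mplus q U', Mminus q U'}. \<forall>z. eigenvalue (restr_traceless q M) z \<longrightarrow> cmod z < 1"
      unfolding U'_def Let_def .
  qed
  show ?thesis using part1 part2 by blast
qed

end
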